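(* Let $\lambda,\mu,\nu$ be partitions of the same integer with $\ell(\lambda)\le 4$, $\ell(\mu),\ell(\nu)\le 2$, and $\mu_2\ge\nu_2$. If (1) $\lambda_3+\lambda_4\le\nu_2\le\lambda_2+\lambda_4$, and (2) $(\lambda_3+\lambda_4)+(\lambda_2+\lambda_4)\le\mu_2+\nu_2\le(\lambda_3+\lambda_4)+\min(\lambda_2+\lambda_3,\lambda_1+\lambda_4)$, then $g_{\mu,\nu,\lambda}=\tilde g_{\mu,\nu,\lambda}$. In particular, when $\lambda_2+\lambda_3\le\lambda_1+\lambda_4$, the chain of inequalities $$\lambda_4\le\mu_2+\nu_2-(\lambda_2+\lambda_3+\lambda_4)\le\lambda_3\le\nu_2-\lambda_4\le\lambda_2$$ is sufficient for $g_{\mu,\nu,\lambda}=\tilde g_{\mu,\nu,\lambda}$.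
   Context: Partitions are padded with zero parts. The Kronecker coefficient $g_{\mu,\nu,\lambda}$ (for $\ell(\mu),\ell(\nu)\le2$, $\ell(\lambda)\le4$, same weight) is defined by $s_\lambda(x_1y_1,x_1y_2,x_2y_1,x_2y_2)=\sum_{\mu,\nu}g_{\mu,\nu,\lambda}\,s_\mu(x_1,x_2)s_\nu(y_1,y_2)$, with $s$ the Schur polynomials. For integers $n,m$, $p_S(n,m)$ is the number of $(x_1,\dots,x_4)\in\mathbb{Z}_{\ge0}^4$ with $x_1+x_3+x_4=n$, $x_2+x_3+2x_4=m$ (zero if $n<0$ or $m<0$). The atomic Kronecker coefficient is $\tilde g_{\mu,\nu,\lambda}:=p_S(\nu_2-\lambda_3-\lambda_4,\ \mu_2+\nu_2-\lambda_2-\lambda_3-2\lambda_4)$; equivalently, it is the coefficient of $x^{\mu_2-\lambda_2-\lambda_4}y^{\nu_2-\lambda_3-\lambda_4}$ in the Laurent expansion of $1/((1-y/x)(1-xy)(1-x)(1-y))$ in the domain $0<|xy|<|y|<|x|<1$. *)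

theory Defs
  imports Main
begin

text \<open>Partitions are nat lists (padded with zero parts). Young diagram cells are
  pairs (row, column), both indexed from 0.\<close>

definition cells :: "nat list \<Rightarrow> (nat \<times> nat) set" where
  "cells sh = {(i, j). i < length sh \<and> j < sh ! i}"

text \<open>Semistandard Young tableaux of shape sh with entries in {0..<n}
  (entry k stands for variable z_(k+1)); extended by 0 outside the diagram.\<close>

definition ssyt :: "nat list \<Rightarrow> nat \<Rightarrow> ((nat \<times> nat) \<Rightarrow> nat) set" where
  "ssyt sh n = {T. (\<forall>c. c \<notin> cells sh \<longrightarrow> T c = 0)
      \<and> (\<forall>c \<in> cells sh. T c < n)
      \<and> (\<forall>i j. (i, Suc j) \<in> cells sh \<longrightarrow> T (i, j) \<le> T (i, Suc j))
      \<and> (\<forall>i j. (Suc i, j) \<in> cells sh \<longrightarrow> T (i, j) < T (Suc i, j))}"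

text \<open>Coefficient of the monomial z_1^(a!0) ... z_n^(a!(n-1)) (n = length a) in the
  Schur polynomial s_sh(z_1,...,z_n) = sum over SSYT T of z^(content T).\<close>

definition schur_coeff :: "nat list \<Rightarrow> nat list \<Rightarrow> nat" where
  "schur_coeff sh a = card {T \<in> ssyt sh (length a).
      \<forall>k < length a. card {c \<in> cells sh. T c = k} = a ! k}"

text \<open>Coefficient of x1^p x2^q y1^r y2^s in s_lam(x1y1, x1y2, x2y1, x2y2).\<close>

definition kron_lhs :: "nat list \<Rightarrow> nat \<Rightarrow> nat \<Rightarrow> nat \<Rightarrow> nat \<Rightarrow> int" where
  "kron_lhs lam p q r s =
     (\<Sum>(a0, a1, a2, a3) \<in> {(a0, a1, a2, a3) \<in> {..p} \<times> {..p} \<times> {..q} \<times> {..q}.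
          a0 + a1 = p \<and> a2 + a3 = q \<and> a0 + a2 = r \<and> a1 + a3 = s}.
        int (schur_coeff lam [a0, a1, a2, a3]))"

text \<open>Coefficient of x1^p x2^q y1^r y2^s in
  sum over mu, nu (length \<le> 2, weight w) of G mu_2 nu_2 * s_mu(x1,x2) s_nu(y1,y2);
  the partitions of weight w with at most 2 parts are (w - i, i) with 2 i \<le> w.\<close>

definition kron_rhs :: "nat \<Rightarrow> (nat \<Rightarrow> nat \<Rightarrow> int) \<Rightarrow> nat \<Rightarrow> nat \<Rightarrow> nat \<Rightarrow> nat \<Rightarrow> int" where
  "kron_rhs w G p q r s =
     (\<Sum>i \<in> {i. 2 * i \<le> w}. \<Sum>j \<in> {j. 2 * j \<le> w}.
        G i j * int (schur_coeff [w - i, i] [p, q]) * int (schur_coeff [w - j, j] [r, s]))"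

text \<open>The family of Kronecker coefficients g_{(w-i,i),(w-j,j),lam}, indexed by (i, j),
  defined as the (unique) coefficients of the expansion.\<close>

definition kron_family :: "nat list \<Rightarrow> nat \<Rightarrow> nat \<Rightarrow> int" where
  "kron_family lam = (THE G. (\<forall>i j. \<not> (2 * i \<le> sum_list lam \<and> 2 * j \<le> sum_list lam) \<longrightarrow> G i j = 0)
      \<and> (\<forall>p q r s. kron_lhs lam p q r s = kron_rhs (sum_list lam) G p q r s))"

definition kron :: "nat list \<Rightarrow> nat list \<Rightarrow> nat list \<Rightarrow> int" where
  "kron mu nu lam = kron_family lam (mu ! 1) (nu ! 1)"

definition pS :: "int \<Rightarrow> int \<Rightarrow> nat" where
  "pS n m = (if n < 0 \<or> m < 0 then 0 else
     card {(x1 :: nat, x2 :: nat, x3 :: nat, x4 :: nat).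
        int x1 + int x3 + int x4 = n \<and> int x2 + int x3 + 2 * int x4 = m})"

definition atomic_kron :: "nat list \<Rightarrow> nat list \<Rightarrow> nat list \<Rightarrow> int" where
  "atomic_kron mu nu lam = int (pS (int (nu ! 1) - int (lam ! 2) - int (lam ! 3))
      (int (mu ! 1) + int (nu ! 1) - int (lam ! 1) - int (lam ! 2) - 2 * int (lam ! 3)))"

end

theory Submission
  imports Defs
begin

lemma downclosed_eq:
  fixes A :: "nat set"
  assumes "finite A" "\<And>x y. x \<in> A \<Longrightarrow> y \<le> x \<Longrightarrow> y \<in> A"
  shows "A = {..<card A}"
proof
  show "A \<subseteq> {..<card A}"
  proof
    fix x assume "x \<in> A"
    hence "{..x} \<subseteq> A" using assms(2)[OF \<open>x \<in> A\<close>] by auto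
    hence "card {..x} \<le> card A" by (rule card_mono[OF assms(1)])
    thus "x \<in> {..<card A}" by simp
  qed
next
  show "{..<card A} \<subseteq> A"
  proof
    fix x assume x: "x \<in> {..<card A}"
    show "x \<in> A"
    proof (rule ccontr)
      assume "x \<notin> A"
      have "A \<subseteq> {..<x}"
      proof
        fix y assume "y \<in> A"
        show "y \<in> {..<x}"
        proof (rule ccontr)
          assume "y \<notin> {..<x}"
          hence "x \<le> y" by simp
          thus False using assms(2)[OF \<open>y \<in> A\<close>] \<open>x \<notin> A\<close> by blast
        qed
      qed
      hence "card A \<le> card {..<x}" by (rule card_mono[OF finite_lessThan])
      hence "card A \<le> x" by simp
      thus False using x by simp
    qed
  qed
qed
lemma mono_row:
  assumes "\<And>j. Suc j < L \<Longrightarrow> g j \<le> (g (Suc j) :: nat)"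
  shows "x \<le> y \<Longrightarrow> y < L \<Longrightarrow> g x \<le> g y"
proof (induction y)
  case 0 thus ?case by simp
next
  case (Suc y)
  show ?case
  proof (cases "x = Suc y")
    case False
    hence "x \<le> y" using Suc.prems by simp
    hence "g x \<le> g y" using Suc by simp
    also have "g y \<le> g (Suc y)" using assms Suc.prems by simp
    finally show ?thesis .
  qed simp
qed

lemma row_thresh:
  assumes "\<And>j. Suc j < L \<Longrightarrow> g j \<le> (g (Suc j) :: nat)" "c < L"
  shows "g c < k \<longleftrightarrow> c < card {c. c < L \<and> g c < k}"
proof -
  have "{c. c < L \<and> g c < k} = {..<card {c. c < L \<and> g c < k}}"
    apply (rule downclosed_eq)
     apply simp
  proof -
    fix x y assume "x \<in> {c. c < L \<and> g c < k}" "y \<le> x"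
    moreover have "g y \<le> g x" using mono_row[of L g, OF assms(1)] calculation by simp
    ultimately show "y \<in> {c. c < L \<and> g c < k}" by simp
  qed
  then show ?thesis using assms(2) by blast
qed

lemma nat_less4: "(i::nat) < 4 \<Longrightarrow> i = 0 \<or> i = 1 \<or> i = 2 \<or> i = 3" by auto
lemma c4row: "(i < 4 \<and> c < [l1,l2,l3,l4]!i) = ((i=0 \<and> c<l1) \<or> (i=1 \<and> c<l2) \<or> (i=2 \<and> c<l3) \<or> (i=3 \<and> c<l4))"
    proof (cases "i < 4")
      case True
      hence "i=0 \<or> i=1 \<or> i=2 \<or> i=3" by (rule nat_less4)
      thus ?thesis by auto
    next
      case False thus ?thesis by auto
    qed
lemma cells4: "cells [l1,l2,l3,l4] = {(i,c). (i=0 \<and> c<l1) \<or> (i=1 \<and> c<l2) \<or> (i=2 \<and> c<l3) \<or> (i=3 \<and> c<l4)}"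
proof -
  have "cells [l1,l2,l3,l4] = {(i,c). i < 4 \<and> c < [l1,l2,l3,l4]!i}" proof -
    have f: "length [l1,l2,l3,l4] = 4" by simp
    show ?thesis unfolding cells_def f ..
  qed
  also have "\<dots> = {(i,c). (i=0 \<and> c<l1) \<or> (i=1 \<and> c<l2) \<or> (i=2 \<and> c<l3) \<or> (i=3 \<and> c<l4)}"
    by (simp only: c4row)
  finally show ?thesis .
qed
lemma card_rows4:
  assumes "finite A0" "finite A1" "finite A2" "finite A3"
  shows "card {(i,c). (i=(0::nat) \<and> c\<in>A0) \<or> (i=1 \<and> c\<in>A1) \<or> (i=2 \<and> c\<in>A2) \<or> (i=3 \<and> c\<in>A3)}
     = card A0 + card A1 + card A2 + card A3"
proof -
  have e: "{(i,c). (i=(0::nat) \<and> c\<in>A0) \<or> (i=1 \<and> c\<in>A1) \<or> (i=2 \<and> c\<in>A2) \<or> (i=3 \<and> c\<in>A3)}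
    = ({0}\<times>A0 \<union> {1}\<times>A1) \<union> ({2}\<times>A2 \<union> {3}\<times>A3)" by auto
  have c1: "card ({0::nat}\<times>A0 \<union> {1}\<times>A1) = card A0 + card A1"
    by (subst card_Un_disjoint) (auto simp: assms card_cartesian_product)
  have c2: "card ({2::nat}\<times>A2 \<union> {3}\<times>A3) = card A2 + card A3"
    by (subst card_Un_disjoint) (auto simp: assms card_cartesian_product)
  have "card (({0::nat}\<times>A0 \<union> {1}\<times>A1) \<union> ({2}\<times>A2 \<union> {3}\<times>A3)) = card ({0::nat}\<times>A0 \<union> {1}\<times>A1) + card ({2::nat}\<times>A2 \<union> {3}\<times>A3)"
    by (rule card_Un_disjoint) (auto simp: assms)
  thus ?thesis using e c1 c2 by simp
qed

type_synonym gt = "nat \<times> nat \<times> nat \<times> nat \<times> nat \<times> nat"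

definition GT :: "nat \<Rightarrow> nat \<Rightarrow> nat \<Rightarrow> nat \<Rightarrow> gt set" where
"GT l1 l2 l3 l4 = {(m1,m2,m3,v1,v2,r). l2 \<le> m1 \<and> m1 \<le> l1 \<and> l3 \<le> m2 \<and> m2 \<le> l2 \<and> l4 \<le> m3 \<and> m3 \<le> l3
   \<and> m2 \<le> v1 \<and> v1 \<le> m1 \<and> m3 \<le> v2 \<and> v2 \<le> m2 \<and> v2 \<le> r \<and> r \<le> v1}"

definition Psi :: "nat \<Rightarrow> nat \<Rightarrow> nat \<Rightarrow> nat \<Rightarrow> gt \<Rightarrow> nat \<times> nat \<Rightarrow> nat" where
"Psi l1 l2 l3 l4 g p = (case g of (m1,m2,m3,v1,v2,r) \<Rightarrow> (case p of (i,c) \<Rightarrow>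
  if i = 0 \<and> c < l1 then (if c < r then 0 else if c < v1 then 1 else if c < m1 then 2 else 3)
  else if i = 1 \<and> c < l2 then (if c < v2 then 1 else if c < m2 then 2 else 3)
  else if i = 2 \<and> c < l3 then (if c < m3 then 2 else 3)
  else if i = 3 \<and> c < l4 then 3 else 0))"

definition ct :: "nat \<Rightarrow> nat \<Rightarrow> nat \<Rightarrow> nat \<Rightarrow> gt \<Rightarrow> nat list" where
"ct l1 l2 l3 l4 g = (case g of (m1,m2,m3,v1,v2,r) \<Rightarrow>
   [r, v1+v2-r, m1+m2+m3-v1-v2, l1+l2+l3+l4-(m1+m2+m3)])"

lemma Psi_ssyt:
  assumes "(m1,m2,m3,v1,v2,r) \<in> GT l1 l2 l3 l4"
  shows "Psi l1 l2 l3 l4 (m1,m2,m3,v1,v2,r) \<in> ssyt [l1,l2,l3,l4] 4"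
proof -
  have g: "l2 \<le> m1 \<and> m1 \<le> l1 \<and> l3 \<le> m2 \<and> m2 \<le> l2 \<and> l4 \<le> m3 \<and> m3 \<le> l3
   \<and> m2 \<le> v1 \<and> v1 \<le> m1 \<and> m3 \<le> v2 \<and> v2 \<le> m2 \<and> v2 \<le> r \<and> r \<le> v1" using assms by (simp add: GT_def)
  let ?T = "Psi l1 l2 l3 l4 (m1,m2,m3,v1,v2,r)"
  have A: "\<forall>c. c \<notin> cells [l1,l2,l3,l4] \<longrightarrow> ?T c = 0"
    unfolding cells4 Psi_def by auto
  have B: "\<forall>c \<in> cells [l1,l2,l3,l4]. ?T c < 4"
    unfolding cells4 Psi_def by auto
  have C: "\<forall>i j. (i, Suc j) \<in> cells [l1,l2,l3,l4] \<longrightarrow> ?T (i, j) \<le> ?T (i, Suc j)"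
    unfolding cells4 Psi_def using g by (auto split: if_splits)
  have D: "\<forall>i j. (Suc i, j) \<in> cells [l1,l2,l3,l4] \<longrightarrow> ?T (i, j) < ?T (Suc i, j)"
    unfolding cells4 Psi_def using g by (auto split: if_splits)
  show ?thesis unfolding ssyt_def using A B C D by blast
qed

lemma Psi_content_sets:
  assumes "(m1,m2,m3,v1,v2,r) \<in> GT l1 l2 l3 l4"
  shows "{p \<in> cells [l1,l2,l3,l4]. Psi l1 l2 l3 l4 (m1,m2,m3,v1,v2,r) p = 0} =
          {(i,c). (i=(0::nat) \<and> c\<in>{..<r}) \<or> (i=1 \<and> c\<in>{}) \<or> (i=2 \<and> c\<in>{}) \<or> (i=3 \<and> c\<in>{})}"
   and "{p \<in> cells [l1,l2,l3,l4]. Psi l1 l2 l3 l4 (m1,m2,m3,v1,v2,r) p = 1} =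
          {(i,c). (i=(0::nat) \<and> c\<in>{r..<v1}) \<or> (i=1 \<and> c\<in>{..<v2}) \<or> (i=2 \<and> c\<in>{}) \<or> (i=3 \<and> c\<in>{})}"
   and "{p \<in> cells [l1,l2,l3,l4]. Psi l1 l2 l3 l4 (m1,m2,m3,v1,v2,r) p = 2} =
          {(i,c). (i=(0::nat) \<and> c\<in>{v1..<m1}) \<or> (i=1 \<and> c\<in>{v2..<m2}) \<or> (i=2 \<and> c\<in>{..<m3}) \<or> (i=3 \<and> c\<in>{})}"
   and "{p \<in> cells [l1,l2,l3,l4]. Psi l1 l2 l3 l4 (m1,m2,m3,v1,v2,r) p = 3} =
          {(i,c). (i=(0::nat) \<and> c\<in>{m1..<l1}) \<or> (i=1 \<and> c\<in>{m2..<l2}) \<or> (i=2 \<and> c\<in>{m3..<l3}) \<or> (i=3 \<and> c\<in>{..<l4})}"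
proof -
  have g: "l2 \<le> m1 \<and> m1 \<le> l1 \<and> l3 \<le> m2 \<and> m2 \<le> l2 \<and> l4 \<le> m3 \<and> m3 \<le> l3
   \<and> m2 \<le> v1 \<and> v1 \<le> m1 \<and> m3 \<le> v2 \<and> v2 \<le> m2 \<and> v2 \<le> r \<and> r \<le> v1" using assms by (simp add: GT_def)
  show "{p \<in> cells [l1,l2,l3,l4]. Psi l1 l2 l3 l4 (m1,m2,m3,v1,v2,r) p = 0} =
          {(i,c). (i=(0::nat) \<and> c\<in>{..<r}) \<or> (i=1 \<and> c\<in>{}) \<or> (i=2 \<and> c\<in>{}) \<or> (i=3 \<and> c\<in>{})}"
    unfolding cells4 Psi_def using g by (auto split: if_splits)
  show "{p \<in> cells [l1,l2,l3,l4]. Psi l1 l2 l3 l4 (m1,m2,m3,v1,v2,r) p = 1} =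
          {(i,c). (i=(0::nat) \<and> c\<in>{r..<v1}) \<or> (i=1 \<and> c\<in>{..<v2}) \<or> (i=2 \<and> c\<in>{}) \<or> (i=3 \<and> c\<in>{})}"
    unfolding cells4 Psi_def using g by (auto split: if_splits)
  show "{p \<in> cells [l1,l2,l3,l4]. Psi l1 l2 l3 l4 (m1,m2,m3,v1,v2,r) p = 2} =
          {(i,c). (i=(0::nat) \<and> c\<in>{v1..<m1}) \<or> (i=1 \<and> c\<in>{v2..<m2}) \<or> (i=2 \<and> c\<in>{..<m3}) \<or> (i=3 \<and> c\<in>{})}"
    unfolding cells4 Psi_def using g by (auto split: if_splits)
  show "{p \<in> cells [l1,l2,l3,l4]. Psi l1 l2 l3 l4 (m1,m2,m3,v1,v2,r) p = 3} =
          {(i,c). (i=(0::nat) \<and> c\<in>{m1..<l1}) \<or> (i=1 \<and> c\<in>{m2..<l2}) \<or> (i=2 \<and> c\<in>{m3..<l3}) \<or> (i=3 \<and> c\<in>{..<l4})}"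
    unfolding cells4 Psi_def using g by (auto split: if_splits)
qed

lemma Psi_content:
  assumes "(m1,m2,m3,v1,v2,r) \<in> GT l1 l2 l3 l4" "k < 4"
  shows "card {p \<in> cells [l1,l2,l3,l4]. Psi l1 l2 l3 l4 (m1,m2,m3,v1,v2,r) p = k} = ct l1 l2 l3 l4 (m1,m2,m3,v1,v2,r) ! k"
proof -
  have g: "l2 \<le> m1 \<and> m1 \<le> l1 \<and> l3 \<le> m2 \<and> m2 \<le> l2 \<and> l4 \<le> m3 \<and> m3 \<le> l3
   \<and> m2 \<le> v1 \<and> v1 \<le> m1 \<and> m3 \<le> v2 \<and> v2 \<le> m2 \<and> v2 \<le> r \<and> r \<le> v1" using assms by (simp add: GT_def)
  have "k=0 \<or> k=1 \<or> k=2 \<or> k=3" using assms(2) by (rule nat_less4)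
  moreover
  { assume kk: "k=0" hence ?thesis unfolding kk Psi_content_sets[OF assms(1)] by (subst card_rows4) (auto simp: ct_def) }
  moreover
  { assume kk: "k=1" hence ?thesis unfolding kk Psi_content_sets[OF assms(1)] using g by (subst card_rows4) (auto simp: ct_def) }
  moreover
  { assume kk: "k=2" hence ?thesis unfolding kk Psi_content_sets[OF assms(1)] using g by (subst card_rows4) (auto simp: ct_def) }
  moreover
  { assume kk: "k=3" hence ?thesis unfolding kk Psi_content_sets[OF assms(1)] using g by (subst card_rows4) (auto simp: ct_def) }
  ultimately show ?thesis by blast
qed

definition Nc :: "nat list \<Rightarrow> (nat \<times> nat \<Rightarrow> nat) \<Rightarrow> nat \<Rightarrow> nat \<Rightarrow> nat" where
"Nc lam T k i = card {c. c < lam!i \<and> T (i,c) < k}"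

definition Phi :: "nat list \<Rightarrow> (nat \<times> nat \<Rightarrow> nat) \<Rightarrow> gt" where
"Phi lam T = (Nc lam T 3 0, Nc lam T 3 1, Nc lam T 3 2, Nc lam T 2 0, Nc lam T 2 1, Nc lam T 1 0)"

lemma Phi_Psi:
  assumes "(m1,m2,m3,v1,v2,r) \<in> GT l1 l2 l3 l4"
  shows "Phi [l1,l2,l3,l4] (Psi l1 l2 l3 l4 (m1,m2,m3,v1,v2,r)) = (m1,m2,m3,v1,v2,r)"
proof -
  have g: "l2 \<le> m1 \<and> m1 \<le> l1 \<and> l3 \<le> m2 \<and> m2 \<le> l2 \<and> l4 \<le> m3 \<and> m3 \<le> l3
   \<and> m2 \<le> v1 \<and> v1 \<le> m1 \<and> m3 \<le> v2 \<and> v2 \<le> m2 \<and> v2 \<le> r \<and> r \<le> v1" using assms by (simp add: GT_def)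
  let ?T = "Psi l1 l2 l3 l4 (m1,m2,m3,v1,v2,r)"
  have 1: "{c. c < l1 \<and> ?T (0,c) < 3} = {..<m1}" using g by (auto simp: Psi_def)
  have 2: "{c. c < l2 \<and> ?T (1,c) < 3} = {..<m2}" using g by (auto simp: Psi_def)
  have 3: "{c. c < l3 \<and> ?T (2,c) < 3} = {..<m3}" using g by (auto simp: Psi_def)
  have 4: "{c. c < l1 \<and> ?T (0,c) < 2} = {..<v1}" using g by (auto simp: Psi_def)
  have 5: "{c. c < l2 \<and> ?T (1,c) < 2} = {..<v2}" using g by (auto simp: Psi_def)
  have 6: "{c. c < l1 \<and> ?T (0,c) = 0} = {..<r}" using g by (auto simp: Psi_def)
  show ?thesis unfolding Phi_def Nc_def by (simp add: 1 2 3 4 5 6 del: One_nat_def)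
qed

lemma inj_Psi: "inj_on (Psi l1 l2 l3 l4) (GT l1 l2 l3 l4)"
proof (rule inj_onI)
  fix g h assume "g \<in> GT l1 l2 l3 l4" "h \<in> GT l1 l2 l3 l4" "Psi l1 l2 l3 l4 g = Psi l1 l2 l3 l4 h"
  moreover obtain a b c d e f where "g = (a,b,c,d,e,f)" by (cases g) auto
  moreover obtain a' b' c' d' e' f' where "h = (a',b',c',d',e',f')" by (cases h) auto
  ultimately show "g = h" using Phi_Psi by metis
qed

lemma ssyt_props:
  assumes "T \<in> ssyt lam n"
  shows "\<And>c. c \<notin> cells lam \<Longrightarrow> T c = 0"
    and "\<And>c. c \<in> cells lam \<Longrightarrow> T c < n"
    and "\<And>i j. (i, Suc j) \<in> cells lam \<Longrightarrow> T (i, j) \<le> T (i, Suc j)"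
    and "\<And>i j. (Suc i, j) \<in> cells lam \<Longrightarrow> T (i, j) < T (Suc i, j)"
  using assms unfolding ssyt_def by blast+

lemma in_cells: "(i,c) \<in> cells lam \<longleftrightarrow> i < length lam \<and> c < lam!i"
  by (simp add: cells_def)

lemma Nc_thresh:
  assumes "T \<in> ssyt lam n" "i < length lam" "c < lam!i"
  shows "T (i,c) < k \<longleftrightarrow> c < Nc lam T k i"
  unfolding Nc_def
  by (rule row_thresh[of "lam!i" "\<lambda>c. T (i,c)"]) (use ssyt_props(3)[OF assms(1)] assms in \<open>auto simp: in_cells\<close>)

lemma Nc_le: "Nc lam T k i \<le> lam!i"
proof -
  have "Nc lam T k i \<le> card {..<lam!i}" unfolding Nc_def by (rule card_mono) auto
  thus ?thesis by simp
qed

lemma Nc_mono: "k \<le> k' \<Longrightarrow> Nc lam T k i \<le> Nc lam T k' i"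
  unfolding Nc_def by (rule card_mono) auto

lemma Nc_full:
  assumes "T \<in> ssyt lam n" "i < length lam"
  shows "Nc lam T n i = lam!i"
proof -
  have "{c. c < lam!i \<and> T (i,c) < n} = {..<lam!i}"
    using ssyt_props(2)[OF assms(1)] assms(2) by (auto simp: in_cells)
  thus ?thesis unfolding Nc_def by simp
qed

lemma Nc_interlace:
  assumes "T \<in> ssyt lam n" "Suc i < length lam" "lam!(Suc i) \<le> lam!i"
  shows "Nc lam T (Suc k) (Suc i) \<le> Nc lam T k i"
  unfolding Nc_def
proof (rule card_mono)
  show "finite {c. c < lam ! i \<and> T (i, c) < k}" by simp
  show "{c. c < lam ! Suc i \<and> T (Suc i, c) < Suc k} \<subseteq> {c. c < lam ! i \<and> T (i, c) < k}"
  proof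
    fix c assume "c \<in> {c. c < lam ! Suc i \<and> T (Suc i, c) < Suc k}"
    hence c: "c < lam ! Suc i" "T (Suc i, c) < Suc k" by auto
    have "T (i,c) < T (Suc i, c)" using ssyt_props(4)[OF assms(1)] c(1) assms(2) by (simp add: in_cells)
    thus "c \<in> {c. c < lam ! i \<and> T (i, c) < k}" using c assms(3) by auto
  qed
qed

lemma Phi_GT:
  assumes T: "T \<in> ssyt [l1,l2,l3,l4] 4" and s: "l2 \<le> l1" "l3 \<le> l2" "l4 \<le> l3"
  shows "Phi [l1,l2,l3,l4] T \<in> GT l1 l2 l3 l4"
proof -
  let ?L = "[l1,l2,l3,l4]"
  let ?N = "Nc ?L T"
  have f1: "?N 4 1 = l2" using Nc_full[OF T, of 1] by simp
  have f2: "?N 4 2 = l3" using Nc_full[OF T, of 2] by simp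
  have f3: "?N 4 3 = l4" using Nc_full[OF T, of 3] by (simp add: numeral_3_eq_3)
  have i30: "?N 4 1 \<le> ?N 3 0" using Nc_interlace[OF T, of 0 3] s by (simp add: numeral_eq_Suc)
  have i31: "?N 4 2 \<le> ?N 3 1" using Nc_interlace[OF T, of 1 3] s by (simp add: numeral_eq_Suc)
  have i32: "?N 4 3 \<le> ?N 3 2" using Nc_interlace[OF T, of 2 3] s by (simp add: numeral_eq_Suc)
  have i20: "?N 3 1 \<le> ?N 2 0" using Nc_interlace[OF T, of 0 2] s by (simp add: numeral_eq_Suc)
  have i21: "?N 3 2 \<le> ?N 2 1" using Nc_interlace[OF T, of 1 2] s by (simp add: numeral_eq_Suc)
  have i10: "?N 2 1 \<le> ?N 1 0" using Nc_interlace[OF T, of 0 1] s by (simp add: numeral_eq_Suc)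
  have m1: "?N 2 0 \<le> ?N 3 0" "?N 2 1 \<le> ?N 3 1" "?N 1 0 \<le> ?N 2 0" by (simp_all add: Nc_mono)
  have b: "?N 3 0 \<le> l1" "?N 3 1 \<le> l2" "?N 3 2 \<le> l3"
    using Nc_le[of ?L T 3 0] Nc_le[of ?L T 3 1] Nc_le[of ?L T 3 2] by simp_all
  show ?thesis unfolding Phi_def GT_def using f1 f2 f3 i30 i31 i32 i20 i21 i10 m1 b by simp
qed

lemma Psi_Phi:
  assumes T: "T \<in> ssyt [l1,l2,l3,l4] 4" and s: "l2 \<le> l1" "l3 \<le> l2" "l4 \<le> l3"
  shows "Psi l1 l2 l3 l4 (Phi [l1,l2,l3,l4] T) = T"
proof
  fix p :: "nat \<times> nat"
  obtain i c where p: "p = (i,c)" by (cases p) auto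
  let ?L = "[l1,l2,l3,l4]"
  let ?N = "Nc ?L T"
  show "Psi l1 l2 l3 l4 (Phi ?L T) p = T p"
  proof (cases "p \<in> cells ?L")
    case False
    hence "T p = 0" using ssyt_props(1)[OF T] by simp
    moreover have "Psi l1 l2 l3 l4 (Phi ?L T) p = 0" using False unfolding p cells4 Phi_def Psi_def by auto
    ultimately show ?thesis by simp
  next
    case True
    hence cs: "(i=0 \<and> c<l1) \<or> (i=1 \<and> c<l2) \<or> (i=2 \<and> c<l3) \<or> (i=3 \<and> c<l4)" unfolding p cells4 by simp
    have bnd: "T (i,c) < 4" using ssyt_props(2)[OF T] True p by simp
    show ?thesis
    proof -
      { assume a: "i=0" "c<l1"
        have t1: "T (0,c) < 1 \<longleftrightarrow> c < ?N 1 0" using Nc_thresh[OF T, of 0 c 1] a by simp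
        have t2: "T (0,c) < 2 \<longleftrightarrow> c < ?N 2 0" using Nc_thresh[OF T, of 0 c 2] a by simp
        have t3: "T (0,c) < 3 \<longleftrightarrow> c < ?N 3 0" using Nc_thresh[OF T, of 0 c 3] a by simp
        have ?thesis using a t1 t2 t3 bnd unfolding p Phi_def Psi_def by auto }
      moreover
      { assume a: "i=1" "c<l2"
        have t2: "T (1,c) < 2 \<longleftrightarrow> c < ?N 2 1" using Nc_thresh[OF T, of 1 c 2] a by simp
        have t3: "T (1,c) < 3 \<longleftrightarrow> c < ?N 3 1" using Nc_thresh[OF T, of 1 c 3] a by simp
        have "T (0,c) < T (1,c)" using ssyt_props(4)[OF T, of 0 c] a by (simp add: in_cells)
        hence ?thesis using a t2 t3 bnd s unfolding p Phi_def Psi_def by auto }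
      moreover
      { assume a: "i=2" "c<l3"
        have t3: "T (2,c) < 3 \<longleftrightarrow> c < ?N 3 2" using Nc_thresh[OF T, of 2 c 3] a by simp
        have "T (0,c) < T (1,c)" using ssyt_props(4)[OF T, of 0 c] a s by (simp add: in_cells)
        moreover have "T (1,c) < T (2,c)" using ssyt_props(4)[OF T, of 1 c] a s by (simp add: in_cells numeral_eq_Suc)
        ultimately have ?thesis using a t3 bnd s unfolding p Phi_def Psi_def by auto }
      moreover
      { assume a: "i=3" "c<l4"
        have "T (0,c) < T (1,c)" using ssyt_props(4)[OF T, of 0 c] a s by (simp add: in_cells)
        moreover have "T (1,c) < T (2,c)" using ssyt_props(4)[OF T, of 1 c] a s by (simp add: in_cells numeral_eq_Suc)
        moreover have "T (2,c) < T (3,c)" using ssyt_props(4)[OF T, of 2 c] a s by (simp add: in_cells numeral_eq_Suc)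
        ultimately have ?thesis using a bnd s unfolding p Phi_def Psi_def by auto }
      ultimately show ?thesis using cs by blast
    qed
  qed
qed

lemma Psi_content_g:
  assumes "g \<in> GT l1 l2 l3 l4" "k < 4"
  shows "card {p \<in> cells [l1,l2,l3,l4]. Psi l1 l2 l3 l4 g p = k} = ct l1 l2 l3 l4 g ! k"
  using Psi_content assms by (cases g) auto

lemma length_ct: "length (ct l1 l2 l3 l4 g) = 4"
  by (cases g) (simp add: ct_def)

lemma schur4:
  assumes s: "l2 \<le> l1" "l3 \<le> l2" "l4 \<le> l3" and la: "length a = 4"
  shows "schur_coeff [l1,l2,l3,l4] a = card {g \<in> GT l1 l2 l3 l4. ct l1 l2 l3 l4 g = a}"
proof -
  let ?L = "[l1,l2,l3,l4]"
  let ?S = "{T \<in> ssyt ?L (length a). \<forall>k < length a. card {c \<in> cells ?L. T c = k} = a ! k}"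
  let ?G = "{g \<in> GT l1 l2 l3 l4. ct l1 l2 l3 l4 g = a}"
  have "?S = Psi l1 l2 l3 l4 ` ?G"
  proof
    show "Psi l1 l2 l3 l4 ` ?G \<subseteq> ?S"
    proof
      fix T assume "T \<in> Psi l1 l2 l3 l4 ` ?G"
      then obtain g where g: "g \<in> GT l1 l2 l3 l4" "ct l1 l2 l3 l4 g = a" and T: "T = Psi l1 l2 l3 l4 g" by auto
      have "T \<in> ssyt ?L 4" using Psi_ssyt g(1) T by (cases g) auto
      moreover have "\<forall>k < 4. card {c \<in> cells ?L. T c = k} = a ! k" using Psi_content_g[OF g(1)] g(2) T by simp
      ultimately show "T \<in> ?S" using la by simp
    qed
  next
    show "?S \<subseteq> Psi l1 l2 l3 l4 ` ?G"
    proof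
      fix T assume TS: "T \<in> ?S"
      hence T: "T \<in> ssyt ?L 4" using la by simp
      have e: "Psi l1 l2 l3 l4 (Phi ?L T) = T" by (rule Psi_Phi[OF T s])
      have g: "Phi ?L T \<in> GT l1 l2 l3 l4" by (rule Phi_GT[OF T s])
      have "ct l1 l2 l3 l4 (Phi ?L T) = a"
      proof (rule nth_equalityI)
        show "length (ct l1 l2 l3 l4 (Phi ?L T)) = length a" using la length_ct by simp
        fix k assume "k < length (ct l1 l2 l3 l4 (Phi ?L T))"
        hence k: "k < 4" using length_ct by simp
        have "ct l1 l2 l3 l4 (Phi ?L T) ! k = card {p \<in> cells ?L. Psi l1 l2 l3 l4 (Phi ?L T) p = k}"
          using Psi_content_g[OF g k] by simp
        also have "\<dots> = card {p \<in> cells ?L. T p = k}" using e by simp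
        also have "\<dots> = a ! k" using TS k la by simp
        finally show "ct l1 l2 l3 l4 (Phi ?L T) ! k = a ! k" .
      qed
      thus "T \<in> Psi l1 l2 l3 l4 ` ?G" using g e by (metis (mono_tags, lifting) image_eqI mem_Collect_eq)
    qed
  qed
  moreover have "inj_on (Psi l1 l2 l3 l4) ?G" using inj_Psi by (rule inj_on_subset) auto
  ultimately show ?thesis unfolding schur_coeff_def by (simp add: card_image)
qed

definition Psi2 :: "nat \<Rightarrow> nat \<Rightarrow> nat \<Rightarrow> nat \<times> nat \<Rightarrow> nat" where
"Psi2 L0 L1 N p = (case p of (r,c) \<Rightarrow> if r = 0 \<and> c < L0 then (if c < N then 0 else 1) else if r = 1 \<and> c < L1 then 1 else 0)"

lemma cells2: "cells [L0,L1] = {(i,c). (i=0 \<and> c<L0) \<or> (i=1 \<and> c<L1)}"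
proof -
  have "\<And>i c. (i < 2 \<and> c < [L0,L1]!i) = ((i=0 \<and> c<L0) \<or> (i=1 \<and> c<L1))"
  proof -
    fix i c show "(i < 2 \<and> c < [L0,L1]!i) = ((i=0 \<and> c<L0) \<or> (i=1 \<and> c<L1))"
    proof (cases "i < 2")
      case True
      hence "i=0 \<or> i=1" by auto
      thus ?thesis by auto
    next
      case False thus ?thesis by auto
    qed
  qed
  moreover have f: "length [L0,L1] = 2" by simp
  ultimately show ?thesis unfolding cells_def f by simp
qed

lemma Psi2_ssyt:
  assumes "L1 \<le> N" "N \<le> L0"
  shows "Psi2 L0 L1 N \<in> ssyt [L0,L1] 2"
  unfolding ssyt_def cells2 Psi2_def using assms by (auto split: if_splits)

lemma Psi2_c0:
  assumes "L1 \<le> N" "N \<le> L0"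
  shows "card {p \<in> cells [L0,L1]. Psi2 L0 L1 N p = 0} = N"
proof -
  have e: "{p \<in> cells [L0,L1]. Psi2 L0 L1 N p = 0} = {(i,c). (i=(0::nat) \<and> c\<in>{..<N}) \<or> (i=1 \<and> c\<in>{}) \<or> (i=2 \<and> c\<in>{}) \<or> (i=3 \<and> c\<in>{})}"
    unfolding cells2 Psi2_def using assms by (auto split: if_splits)
  show ?thesis unfolding e by (subst card_rows4) auto
qed

lemma Psi2_c1:
  assumes "L1 \<le> N" "N \<le> L0"
  shows "card {p \<in> cells [L0,L1]. Psi2 L0 L1 N p = 1} = L0 - N + L1"
proof -
  have e: "{p \<in> cells [L0,L1]. Psi2 L0 L1 N p = 1} = {(i,c). (i=(0::nat) \<and> c\<in>{N..<L0}) \<or> (i=1 \<and> c\<in>{..<L1}) \<or> (i=2 \<and> c\<in>{}) \<or> (i=3 \<and> c\<in>{})}"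
    unfolding cells2 Psi2_def using assms by (auto split: if_splits)
  show ?thesis unfolding e by (subst card_rows4) auto
qed

lemma ssyt2_eq:
  assumes T: "T \<in> ssyt [L0,L1] 2" and s: "L1 \<le> L0"
  shows "L1 \<le> Nc [L0,L1] T 1 0 \<and> Nc [L0,L1] T 1 0 \<le> L0 \<and> T = Psi2 L0 L1 (Nc [L0,L1] T 1 0)"
proof -
  let ?N = "Nc [L0,L1] T 1 0"
  have le: "?N \<le> L0" using Nc_le[of "[L0,L1]" T 1 0] by simp
  have ge: "Nc [L0,L1] T 2 1 \<le> ?N" using Nc_interlace[OF T, of 0 1] s by (simp add: numeral_2_eq_2)
  have full: "Nc [L0,L1] T 2 1 = L1" using Nc_full[OF T, of 1] by simp
  have eq: "T = Psi2 L0 L1 ?N"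
  proof
    fix p :: "nat \<times> nat"
    obtain i c where p: "p = (i,c)" by (cases p) auto
    show "T p = Psi2 L0 L1 ?N p"
    proof (cases "p \<in> cells [L0,L1]")
      case False
      thus ?thesis using ssyt_props(1)[OF T] unfolding p cells2 Psi2_def by auto
    next
      case True
      hence cs: "(i=0 \<and> c<L0) \<or> (i=1 \<and> c<L1)" unfolding p cells2 by simp
      have bnd: "T (i,c) < 2" using ssyt_props(2)[OF T] True p by simp
      { assume a: "i=0" "c<L0"
        have t1: "T (0,c) < 1 \<longleftrightarrow> c < ?N" using Nc_thresh[OF T, of 0 c 1] a by simp
        hence ?thesis using a bnd unfolding p Psi2_def by auto }
      moreover
      { assume a: "i=1" "c<L1"
        have "T (0,c) < T (1,c)" using ssyt_props(4)[OF T, of 0 c] a by (simp add: in_cells)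
        hence ?thesis using a bnd s unfolding p Psi2_def by auto }
      ultimately show ?thesis using cs by blast
    qed
  qed
  show ?thesis using le ge full eq by simp
qed

lemma schur2:
  assumes "2 * i \<le> w"
  shows "schur_coeff [w - i, i] [p, q] = (if p + q = w \<and> i \<le> p \<and> i \<le> q then 1 else 0)"
proof -
  let ?L0 = "w - i"
  let ?S = "{T \<in> ssyt [?L0, i] (length [p,q]). \<forall>k < length [p,q]. card {c \<in> cells [?L0,i]. T c = k} = [p,q] ! k}"
  have s: "i \<le> ?L0" using assms by simp
  have l: "length [p,q] = 2" by simp
  have S: "?S = {T \<in> ssyt [?L0, i] 2. card {c \<in> cells [?L0,i]. T c = 0} = p \<and> card {c \<in> cells [?L0,i]. T c = 1} = q}"
  proof -
    have "\<And>T. (\<forall>k < 2. card {c \<in> cells [?L0,i]. T c = k} = [p,q] ! k) \<longleftrightarrow>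
         (card {c \<in> cells [?L0,i]. T c = 0} = p \<and> card {c \<in> cells [?L0,i]. T c = 1} = q)"
    proof -
      fix T
      have "\<And>k. k < (2::nat) \<longleftrightarrow> k = 0 \<or> k = (1::nat)" by auto
      thus "(\<forall>k < 2. card {c \<in> cells [?L0,i]. T c = k} = [p,q] ! k) \<longleftrightarrow>
         (card {c \<in> cells [?L0,i]. T c = 0} = p \<and> card {c \<in> cells [?L0,i]. T c = 1} = q)" by auto
    qed
    thus ?thesis unfolding l by (simp only:)
  qed
  show ?thesis
  proof (cases "p + q = w \<and> i \<le> p \<and> i \<le> q")
    case True
    have "?S = {Psi2 ?L0 i p}"
    proof
      show "{Psi2 ?L0 i p} \<subseteq> ?S" unfolding S using True Psi2_ssyt[of i p ?L0] Psi2_c0[of i p ?L0] Psi2_c1[of i p ?L0] by auto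
      show "?S \<subseteq> {Psi2 ?L0 i p}"
      proof
        fix T assume "T \<in> ?S"
        hence T: "T \<in> ssyt [?L0, i] 2" and c0: "card {c \<in> cells [?L0,i]. T c = 0} = p" unfolding S by auto
        obtain N where N: "i \<le> N" "N \<le> ?L0" "T = Psi2 ?L0 i N" using ssyt2_eq[OF T s] by blast
        have "N = p" using c0 Psi2_c0[OF N(1,2)] N(3) by simp
        thus "T \<in> {Psi2 ?L0 i p}" using N(3) by simp
      qed
    qed
    thus ?thesis using True unfolding schur_coeff_def by simp
  next
    case False
    have "?S = {}"
    proof (rule ccontr)
      assume "?S \<noteq> {}"
      then obtain T where "T \<in> ?S" by blast
      hence T: "T \<in> ssyt [?L0, i] 2" and c0: "card {c \<in> cells [?L0,i]. T c = 0} = p"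
          and c1: "card {c \<in> cells [?L0,i]. T c = 1} = q" unfolding S by auto
      obtain N where N: "i \<le> N" "N \<le> ?L0" "T = Psi2 ?L0 i N" using ssyt2_eq[OF T s] by blast
      have "N = p" using c0 Psi2_c0[OF N(1,2)] N(3) by simp
      moreover have "?L0 - N + i = q" using c1 Psi2_c1[OF N(1,2)] N(3) by simp
      ultimately show False using False N(1,2) s by auto
    qed
    hence "card ?S = 0" by (simp only: card.empty)
    thus ?thesis using False unfolding schur_coeff_def by simp
  qed
qed

definition bk0 :: "gt \<Rightarrow> gt" where
"bk0 g = (case g of (m1,m2,m3,v1,v2,r) \<Rightarrow> (m1,m2,m3,v1,v2, v1+v2-r))"
definition bk1 :: "gt \<Rightarrow> gt" where
"bk1 g = (case g of (m1,m2,m3,v1,v2,r) \<Rightarrow> (m1,m2,m3, max m2 r + m1 - v1, m3 + min m2 r - v2, r))"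
definition bk2 :: "nat \<Rightarrow> nat \<Rightarrow> nat \<Rightarrow> nat \<Rightarrow> gt \<Rightarrow> gt" where
"bk2 l1 l2 l3 l4 g = (case g of (m1,m2,m3,v1,v2,r) \<Rightarrow>
   (max l2 v1 + l1 - m1, max l3 v2 + min l2 v1 - m2, l4 + min l3 v2 - m3, v1, v2, r))"

lemma bk0_props:
  assumes "g \<in> GT l1 l2 l3 l4"
  shows "bk0 g \<in> GT l1 l2 l3 l4" "bk0 (bk0 g) = g"
    "ct l1 l2 l3 l4 (bk0 g) = (let c = ct l1 l2 l3 l4 g in [c!1, c!0, c!2, c!3])"
  using assms by (cases g; auto simp: GT_def bk0_def ct_def)+

lemma bk1_props:
  assumes "g \<in> GT l1 l2 l3 l4"
  shows "bk1 g \<in> GT l1 l2 l3 l4" "bk1 (bk1 g) = g"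
    "ct l1 l2 l3 l4 (bk1 g) = (let c = ct l1 l2 l3 l4 g in [c!0, c!2, c!1, c!3])"
  using assms by (cases g; auto simp: GT_def bk1_def ct_def max_def min_def)+

lemma bk2_props:
  assumes "g \<in> GT l1 l2 l3 l4"
  shows "bk2 l1 l2 l3 l4 g \<in> GT l1 l2 l3 l4" "bk2 l1 l2 l3 l4 (bk2 l1 l2 l3 l4 g) = g"
    "ct l1 l2 l3 l4 (bk2 l1 l2 l3 l4 g) = (let c = ct l1 l2 l3 l4 g in [c!0, c!1, c!3, c!2])"
  using assms by (cases g; auto simp: GT_def bk2_def ct_def max_def min_def)+

lemma inv_bij:
  assumes "\<And>g. g \<in> A \<Longrightarrow> f g \<in> A" "\<And>g. g \<in> A \<Longrightarrow> f (f g) = g"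
  shows "bij_betw f A A"
proof (rule bij_betw_byWitness[where f'=f])
  show "\<forall>a\<in>A. f (f a) = a" using assms(2) by simp
  show "\<forall>a\<in>A. f (f a) = a" using assms(2) by simp
  show "f ` A \<subseteq> A" using assms(1) by (simp add: image_subset_iff)
  show "f ` A \<subseteq> A" using assms(1) by (simp add: image_subset_iff)
qed

lemma bij_card_pred:
  assumes "bij_betw f A A"
  shows "card {g \<in> A. Q (f g)} = card {g \<in> A. Q g}"
proof -
  have inj0: "inj_on f A" using assms by (rule bij_betw_imp_inj_on)
  have inj: "inj_on f {g \<in> A. Q (f g)}" by (rule inj_on_subset[OF inj0]) simp
  have im: "f ` A = A" using assms by (simp add: bij_betw_def)
  have "f ` {g \<in> A. Q (f g)} = {g \<in> A. Q g}"
  proof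
    show "f ` {g \<in> A. Q (f g)} \<subseteq> {g \<in> A. Q g}"
    proof
      fix h assume "h \<in> f ` {g \<in> A. Q (f g)}"
      then obtain g where "g \<in> A" "Q (f g)" "h = f g" by auto
      moreover have "f g \<in> A" using \<open>g \<in> A\<close> im by auto
      ultimately show "h \<in> {g \<in> A. Q g}" by simp
    qed
    show "{g \<in> A. Q g} \<subseteq> f ` {g \<in> A. Q (f g)}"
    proof
      fix h assume h: "h \<in> {g \<in> A. Q g}"
      hence "h \<in> f ` A" using im by simp
      then obtain g where "g \<in> A" "h = f g" by auto
      thus "h \<in> f ` {g \<in> A. Q (f g)}" using h by auto
    qed
  qed
  thus ?thesis using card_image[OF inj] by simp
qed

definition Pc :: "nat \<Rightarrow> nat \<Rightarrow> nat \<Rightarrow> nat \<Rightarrow> nat list \<Rightarrow> bool" where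
"Pc p q r s c = (c!0 + c!1 = p \<and> c!2 + c!3 = q \<and> c!0 + c!2 = r \<and> c!1 + c!3 = s)"

definition cnt :: "nat \<Rightarrow> nat \<Rightarrow> nat \<Rightarrow> nat \<Rightarrow> nat \<Rightarrow> nat \<Rightarrow> nat \<Rightarrow> nat \<Rightarrow> nat" where
"cnt l1 l2 l3 l4 p q r s = card {g \<in> GT l1 l2 l3 l4. Pc p q r s (ct l1 l2 l3 l4 g)}"

lemma bij_bk0: "bij_betw bk0 (GT l1 l2 l3 l4) (GT l1 l2 l3 l4)"
  by (rule inv_bij) (simp_all add: bk0_props)
lemma bij_bk1: "bij_betw bk1 (GT l1 l2 l3 l4) (GT l1 l2 l3 l4)"
  by (rule inv_bij) (simp_all add: bk1_props)
lemma bij_bk2: "bij_betw (bk2 l1 l2 l3 l4) (GT l1 l2 l3 l4) (GT l1 l2 l3 l4)"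
  by (rule inv_bij) (simp_all add: bk2_props)

lemma cnt_swap_x: "cnt l1 l2 l3 l4 p q r s = cnt l1 l2 l3 l4 q p r s"
proof -
  let ?G = "GT l1 l2 l3 l4"
  let ?b = "bk1 \<circ> bk0 \<circ> bk2 l1 l2 l3 l4 \<circ> bk1"
  have b: "bij_betw ?b ?G ?G"
    using bij_betw_trans[OF bij_bk1 bij_betw_trans[OF bij_bk2 bij_betw_trans[OF bij_bk0 bij_bk1]]] by simp
  have c: "\<And>g. g \<in> ?G \<Longrightarrow> ct l1 l2 l3 l4 (?b g) = (let c = ct l1 l2 l3 l4 g in [c!2, c!3, c!0, c!1])"
  proof -
    fix g assume g: "g \<in> ?G"
    have g1: "bk1 g \<in> ?G" using bk1_props(1)[OF g] .
    have g2: "bk2 l1 l2 l3 l4 (bk1 g) \<in> ?G" using bk2_props(1)[OF g1] .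
    have g3: "bk0 (bk2 l1 l2 l3 l4 (bk1 g)) \<in> ?G" using bk0_props(1)[OF g2] .
    show "ct l1 l2 l3 l4 (?b g) = (let c = ct l1 l2 l3 l4 g in [c!2, c!3, c!0, c!1])"
      using bk1_props(3)[OF g3] bk0_props(3)[OF g2] bk2_props(3)[OF g1] bk1_props(3)[OF g] by (simp add: Let_def)
  qed
  have "cnt l1 l2 l3 l4 p q r s = card {g \<in> ?G. Pc p q r s (ct l1 l2 l3 l4 (?b g))}"
    unfolding cnt_def using bij_card_pred[OF b, of "\<lambda>g. Pc p q r s (ct l1 l2 l3 l4 g)"] by simp
  also have "\<dots> = card {g \<in> ?G. Pc q p r s (ct l1 l2 l3 l4 g)}"
  proof (rule arg_cong[where f=card], rule Collect_cong)
    fix g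
    show "(g \<in> ?G \<and> Pc p q r s (ct l1 l2 l3 l4 (?b g))) = (g \<in> ?G \<and> Pc q p r s (ct l1 l2 l3 l4 g))"
    proof (cases "g \<in> ?G")
      case True
      have e: "ct l1 l2 l3 l4 (?b g) = (let c = ct l1 l2 l3 l4 g in [c!2, c!3, c!0, c!1])" using c[OF True] .
      show ?thesis unfolding e Pc_def Let_def using True by auto
    qed simp
  qed
  finally show ?thesis unfolding cnt_def .
qed

lemma cnt_swap_y: "cnt l1 l2 l3 l4 p q r s = cnt l1 l2 l3 l4 p q s r"
proof -
  let ?G = "GT l1 l2 l3 l4"
  let ?b = "bk0 \<circ> bk2 l1 l2 l3 l4"
  have b: "bij_betw ?b ?G ?G"
    using bij_betw_trans[OF bij_bk2 bij_bk0] by simp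
  have c: "\<And>g. g \<in> ?G \<Longrightarrow> ct l1 l2 l3 l4 (?b g) = (let c = ct l1 l2 l3 l4 g in [c!1, c!0, c!3, c!2])"
  proof -
    fix g assume g: "g \<in> ?G"
    have g1: "bk2 l1 l2 l3 l4 g \<in> ?G" using bk2_props(1)[OF g] .
    show "ct l1 l2 l3 l4 (?b g) = (let c = ct l1 l2 l3 l4 g in [c!1, c!0, c!3, c!2])"
      using bk0_props(3)[OF g1] bk2_props(3)[OF g] by (simp add: Let_def)
  qed
  have "cnt l1 l2 l3 l4 p q r s = card {g \<in> ?G. Pc p q r s (ct l1 l2 l3 l4 (?b g))}"
    unfolding cnt_def using bij_card_pred[OF b, of "\<lambda>g. Pc p q r s (ct l1 l2 l3 l4 g)"] by simp
  also have "\<dots> = card {g \<in> ?G. Pc p q s r (ct l1 l2 l3 l4 g)}"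
  proof (rule arg_cong[where f=card], rule Collect_cong)
    fix g
    show "(g \<in> ?G \<and> Pc p q r s (ct l1 l2 l3 l4 (?b g))) = (g \<in> ?G \<and> Pc p q s r (ct l1 l2 l3 l4 g))"
    proof (cases "g \<in> ?G")
      case True
      have e: "ct l1 l2 l3 l4 (?b g) = (let c = ct l1 l2 l3 l4 g in [c!1, c!0, c!3, c!2])" using c[OF True] .
      show ?thesis unfolding e Pc_def Let_def using True by auto
    qed simp
  qed
  finally show ?thesis unfolding cnt_def .
qed

lemma finite_GT: "finite (GT l1 l2 l3 l4)"
proof (rule finite_subset)
  show "GT l1 l2 l3 l4 \<subseteq> {..l1} \<times> {..l1} \<times> {..l1} \<times> {..l1} \<times> {..l1} \<times> {..l1}"
    unfolding GT_def by auto
qed simp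

lemma ct_expand: "ct l1 l2 l3 l4 g = [ct l1 l2 l3 l4 g ! 0, ct l1 l2 l3 l4 g ! 1, ct l1 l2 l3 l4 g ! 2, ct l1 l2 l3 l4 g ! 3]"
  by (cases g) (simp add: ct_def)

lemma kron_lhs_cnt:
  assumes s: "l2 \<le> l1" "l3 \<le> l2" "l4 \<le> l3"
  shows "kron_lhs [l1,l2,l3,l4] p q r s = int (cnt l1 l2 l3 l4 p q r s)"
proof -
  let ?I = "{(a0, a1, a2, a3) \<in> {..p} \<times> {..p} \<times> {..q} \<times> {..q}. a0 + a1 = p \<and> a2 + a3 = q \<and> a0 + a2 = r \<and> a1 + a3 = s}"
  let ?A = "\<lambda>x. {g \<in> GT l1 l2 l3 l4. ct l1 l2 l3 l4 g = (case x of (a0,a1,a2,a3) \<Rightarrow> [a0,a1,a2,a3])}"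
  have fI: "finite ?I" by (rule finite_subset[of _ "{..p} \<times> {..p} \<times> {..q} \<times> {..q}"]) auto
  have "kron_lhs [l1,l2,l3,l4] p q r s = (\<Sum>x\<in>?I. int (card (?A x)))"
    unfolding kron_lhs_def
    by (rule sum.cong) (auto simp: schur4[OF s])
  also have "\<dots> = int (\<Sum>x\<in>?I. card (?A x))" by simp
  also have "(\<Sum>x\<in>?I. card (?A x)) = card (\<Union>x\<in>?I. ?A x)"
    by (rule card_UN_disjoint[symmetric]) (use fI finite_GT in auto)
  also have "(\<Union>x\<in>?I. ?A x) = {g \<in> GT l1 l2 l3 l4. Pc p q r s (ct l1 l2 l3 l4 g)}"
  proof
    show "(\<Union>x\<in>?I. ?A x) \<subseteq> {g \<in> GT l1 l2 l3 l4. Pc p q r s (ct l1 l2 l3 l4 g)}"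
      by (auto simp: Pc_def)
    show "{g \<in> GT l1 l2 l3 l4. Pc p q r s (ct l1 l2 l3 l4 g)} \<subseteq> (\<Union>x\<in>?I. ?A x)"
    proof
      fix g assume g: "g \<in> {g \<in> GT l1 l2 l3 l4. Pc p q r s (ct l1 l2 l3 l4 g)}"
      let ?c = "ct l1 l2 l3 l4 g"
      have x: "(?c!0, ?c!1, ?c!2, ?c!3) \<in> ?I" using g by (auto simp: Pc_def)
      have "g \<in> ?A (?c!0, ?c!1, ?c!2, ?c!3)" using g ct_expand[of l1 l2 l3 l4 g] by simp
      thus "g \<in> (\<Union>x\<in>?I. ?A x)" using x by blast
    qed
  qed
  finally show ?thesis unfolding cnt_def .
qed

definition PS :: "(nat \<Rightarrow> nat \<Rightarrow> int) \<Rightarrow> int \<Rightarrow> int \<Rightarrow> int" where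
"PS G a b = (if a < 0 \<or> b < 0 then 0 else (\<Sum>i\<le>nat a. \<Sum>j\<le>nat b. G i j))"

lemma PS_diff:
  fixes G :: "nat \<Rightarrow> nat \<Rightarrow> int"
  shows "G i j = PS G (int i) (int j) - PS G (int i - 1) (int j) - PS G (int i) (int j - 1) + PS G (int i - 1) (int j - 1)"
proof (cases i)
  case 0 note i0 = this
  show ?thesis
  proof (cases j)
    case 0 thus ?thesis using i0 unfolding PS_def by simp
  next
    case (Suc j')
    have jj: "int j - 1 = int j'" using Suc by simp
    have nn: "nat (1 + int j') = Suc j'" by simp
    show ?thesis unfolding jj using i0 Suc unfolding PS_def by (simp add: sum.atMost_Suc nn)
  qed
next
  case (Suc i') note iS = this
  have ii: "int i - 1 = int i'" using Suc by simp
  have ni: "nat (1 + int i') = Suc i'" by simp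
  show ?thesis
  proof (cases j)
    case 0 thus ?thesis unfolding ii using iS unfolding PS_def by (simp add: sum.atMost_Suc ni)
  next
    case (Suc j')
    have jj: "int j - 1 = int j'" using Suc by simp
    have nj: "nat (1 + int j') = Suc j'" by simp
    show ?thesis unfolding ii jj using iS Suc unfolding PS_def by (simp add: sum.atMost_Suc sum.distrib ni nj)
  qed
qed

lemma telescope:
  fixes f :: "int \<Rightarrow> int"
  assumes "f (-1) = 0"
  shows "(\<Sum>j\<le>b. f (int j) - f (int j - 1)) = f (int b)"
proof (induction b)
  case 0 thus ?case using assms by simp
next
  case (Suc b)
  have "int (Suc b) - 1 = int b" by simp
  thus ?case using Suc by (simp add: sum.atMost_Suc)
qed

definition Fk :: "nat \<Rightarrow> nat \<Rightarrow> nat \<Rightarrow> nat \<Rightarrow> int \<Rightarrow> int \<Rightarrow> int" where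
"Fk l1 l2 l3 l4 a b = (if a < 0 \<or> b < 0 then 0 else
   int (cnt l1 l2 l3 l4 (nat a) (l1+l2+l3+l4 - nat a) (nat b) (l1+l2+l3+l4 - nat b)))"

definition G0 :: "nat \<Rightarrow> nat \<Rightarrow> nat \<Rightarrow> nat \<Rightarrow> nat \<Rightarrow> nat \<Rightarrow> int" where
"G0 l1 l2 l3 l4 i j = (if 2*i \<le> l1+l2+l3+l4 \<and> 2*j \<le> l1+l2+l3+l4 then
   Fk l1 l2 l3 l4 (int i) (int j) - Fk l1 l2 l3 l4 (int i - 1) (int j)
   - Fk l1 l2 l3 l4 (int i) (int j - 1) + Fk l1 l2 l3 l4 (int i - 1) (int j - 1) else 0)"

lemma PS_G0:
  assumes "2*a \<le> l1+l2+l3+l4" "2*b \<le> l1+l2+l3+l4"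
  shows "PS (G0 l1 l2 l3 l4) (int a) (int b) = Fk l1 l2 l3 l4 (int a) (int b)"
proof -
  let ?F = "Fk l1 l2 l3 l4"
  have "PS (G0 l1 l2 l3 l4) (int a) (int b) = (\<Sum>i\<le>a. \<Sum>j\<le>b. G0 l1 l2 l3 l4 i j)" unfolding PS_def by simp
  also have "\<dots> = (\<Sum>i\<le>a. ?F (int i) (int b) - ?F (int i - 1) (int b))"
  proof (rule sum.cong)
    fix i assume i: "i \<in> {..a}"
    have "(\<Sum>j\<le>b. G0 l1 l2 l3 l4 i j) = (\<Sum>j\<le>b. (\<lambda>y. ?F (int i) y - ?F (int i - 1) y) (int j) - (\<lambda>y. ?F (int i) y - ?F (int i - 1) y) (int j - 1))"
      by (rule sum.cong) (use i assms in \<open>auto simp: G0_def\<close>)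
    also have "\<dots> = ?F (int i) (int b) - ?F (int i - 1) (int b)"
      by (rule telescope[of "\<lambda>y. ?F (int i) y - ?F (int i - 1) y"]) (simp add: Fk_def)
    finally show "(\<Sum>j\<le>b. G0 l1 l2 l3 l4 i j) = ?F (int i) (int b) - ?F (int i - 1) (int b)" .
  qed simp
  also have "\<dots> = ?F (int a) (int b)"
    by (rule telescope[of "\<lambda>x. ?F x (int b)"]) (simp add: Fk_def)
  finally show ?thesis .
qed

lemma ct_sum: "g \<in> GT l1 l2 l3 l4 \<Longrightarrow> (let c = ct l1 l2 l3 l4 g in c!0 + c!1 + c!2 + c!3) = l1+l2+l3+l4"
  by (cases g) (auto simp: GT_def ct_def)

lemma cnt_zero:
  assumes "\<not> (p + q = l1+l2+l3+l4 \<and> r + s = l1+l2+l3+l4)"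
  shows "cnt l1 l2 l3 l4 p q r s = 0"
proof -
  have "{g \<in> GT l1 l2 l3 l4. Pc p q r s (ct l1 l2 l3 l4 g)} = {}"
  proof (rule ccontr)
    assume "{g \<in> GT l1 l2 l3 l4. Pc p q r s (ct l1 l2 l3 l4 g)} \<noteq> {}"
    then obtain g where g: "g \<in> GT l1 l2 l3 l4" "Pc p q r s (ct l1 l2 l3 l4 g)" by blast
    have "(let c = ct l1 l2 l3 l4 g in c!0 + c!1 + c!2 + c!3) = l1+l2+l3+l4" by (rule ct_sum[OF g(1)])
    thus False using g(2) assms by (simp add: Pc_def Let_def)
  qed
  thus ?thesis unfolding cnt_def by (simp only: card.empty)
qed

lemma cnt_min:
  assumes "p + q = l1+l2+l3+l4" "r + s = l1+l2+l3+l4"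
  shows "cnt l1 l2 l3 l4 p q r s = cnt l1 l2 l3 l4 (min p q) (l1+l2+l3+l4 - min p q) (min r s) (l1+l2+l3+l4 - min r s)"
proof -
  have x: "cnt l1 l2 l3 l4 p q r s = cnt l1 l2 l3 l4 (min p q) (max p q) r s"
    using cnt_swap_x[of l1 l2 l3 l4 p q r s] by (cases "p \<le> q") (auto simp: min_def max_def)
  have y: "cnt l1 l2 l3 l4 (min p q) (max p q) r s = cnt l1 l2 l3 l4 (min p q) (max p q) (min r s) (max r s)"
    using cnt_swap_y[of l1 l2 l3 l4 "min p q" "max p q" r s] by (cases "r \<le> s") (auto simp: min_def max_def)
  have "max p q = l1+l2+l3+l4 - min p q" "max r s = l1+l2+l3+l4 - min r s" using assms by (auto simp: min_def max_def)
  thus ?thesis using x y by simp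
qed

lemma rhs_eval:
  assumes s: "l2 \<le> l1" "l3 \<le> l2" "l4 \<le> l3"
  shows "kron_rhs (l1+l2+l3+l4) G p q r s = (if p + q = l1+l2+l3+l4 \<and> r + s = l1+l2+l3+l4 then PS G (int (min p q)) (int (min r s)) else 0)"
proof -
  let ?W = "l1+l2+l3+l4"
  have e: "kron_rhs ?W G p q r s = (\<Sum>i \<in> {i. 2 * i \<le> ?W}. \<Sum>j \<in> {j. 2 * j \<le> ?W}.
        (if p + q = ?W \<and> i \<le> p \<and> i \<le> q \<and> r + s = ?W \<and> j \<le> r \<and> j \<le> s then G i j else 0))"
    unfolding kron_rhs_def by (rule sum.cong, simp, rule sum.cong) (auto simp: schur2)
  show ?thesis
  proof (cases "p + q = ?W \<and> r + s = ?W")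
    case False
    thus ?thesis unfolding e by auto
  next
    case True
    have fin: "finite {i. 2 * i \<le> ?W}" by (rule finite_subset[of _ "{..?W}"]) auto
    have A: "{i. 2 * i \<le> ?W} \<inter> {i. i \<le> min p q} = {..min p q}" using True by auto
    have B: "{j. 2 * j \<le> ?W} \<inter> {j. j \<le> min r s} = {..min r s}" using True by auto
    have "kron_rhs ?W G p q r s = (\<Sum>i \<in> {i. 2 * i \<le> ?W}. if i \<le> min p q then (\<Sum>j \<in> {j. 2 * j \<le> ?W}. if j \<le> min r s then G i j else 0) else 0)"
      unfolding e using True by (intro sum.cong) auto
    also have "\<dots> = (\<Sum>i \<in> {..min p q}. (\<Sum>j \<in> {j. 2 * j \<le> ?W}. if j \<le> min r s then G i j else 0))"
      by (simp add: sum.inter_filter[OF fin, symmetric] A[symmetric] Int_def)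
    also have "\<dots> = (\<Sum>i \<in> {..min p q}. (\<Sum>j \<in> {..min r s}. G i j))"
      by (rule sum.cong, simp) (simp add: sum.inter_filter[OF fin, symmetric] B[symmetric] Int_def)
    finally show ?thesis using True unfolding PS_def by simp
  qed
qed

lemma kron_family_eq:
  assumes s: "l2 \<le> l1" "l3 \<le> l2" "l4 \<le> l3"
  shows "kron_family [l1,l2,l3,l4] = G0 l1 l2 l3 l4"
proof -
  let ?W = "l1+l2+l3+l4"
  have sl: "sum_list [l1,l2,l3,l4] = ?W" by simp
  let ?P = "\<lambda>G. (\<forall>i j. \<not> (2 * i \<le> ?W \<and> 2 * j \<le> ?W) \<longrightarrow> G i j = 0)
      \<and> (\<forall>p q r s. kron_lhs [l1,l2,l3,l4] p q r s = kron_rhs ?W G p q r s)"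
  have key: "\<And>p q r s. kron_lhs [l1,l2,l3,l4] p q r s = (if p + q = ?W \<and> r + s = ?W then Fk l1 l2 l3 l4 (int (min p q)) (int (min r s)) else 0)"
  proof -
    fix p q r s
    show "kron_lhs [l1,l2,l3,l4] p q r s = (if p + q = ?W \<and> r + s = ?W then Fk l1 l2 l3 l4 (int (min p q)) (int (min r s)) else 0)"
    proof (cases "p + q = ?W \<and> r + s = ?W")
      case True
      thus ?thesis using kron_lhs_cnt[OF s] cnt_min[of p q l1 l2 l3 l4 r s] by (simp add: Fk_def)
    next
      case False
      have "kron_lhs [l1,l2,l3,l4] p q r s = 0" using kron_lhs_cnt[OF s] cnt_zero[OF False] by simp
      thus ?thesis using False by (simp only: if_False)
    qed
  qed
  have P0: "?P (G0 l1 l2 l3 l4)"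
  proof
    show "\<forall>i j. \<not> (2 * i \<le> ?W \<and> 2 * j \<le> ?W) \<longrightarrow> G0 l1 l2 l3 l4 i j = 0" by (simp add: G0_def)
    show "\<forall>p q r s. kron_lhs [l1,l2,l3,l4] p q r s = kron_rhs ?W (G0 l1 l2 l3 l4) p q r s"
    proof (intro allI)
      fix p q r s
      show "kron_lhs [l1,l2,l3,l4] p q r s = kron_rhs ?W (G0 l1 l2 l3 l4) p q r s"
      proof (cases "p + q = ?W \<and> r + s = ?W")
        case True
        have "2 * min p q \<le> ?W" "2 * min r s \<le> ?W" using True by (auto simp: min_def)
        thus ?thesis using True key rhs_eval[OF s] PS_G0 by simp
      next
        case False
        show ?thesis unfolding key[of p q r s] rhs_eval[OF s, of _ p q r s] if_not_P[OF False] ..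
      qed
    qed
  qed
  have uniq: "\<And>G. ?P G \<Longrightarrow> G = G0 l1 l2 l3 l4"
  proof
    fix G i assume PG: "?P G"
    show "G i = G0 l1 l2 l3 l4 i"
    proof
      fix j
      show "G i j = G0 l1 l2 l3 l4 i j"
      proof (cases "2 * i \<le> ?W \<and> 2 * j \<le> ?W")
        case False
        have "G i j = 0" using PG False by blast
        moreover have "G0 l1 l2 l3 l4 i j = 0" unfolding G0_def using False by (simp only: if_not_P[OF False] if_False)
        ultimately show ?thesis by simp
      next
        case True
        have PSF: "PS G x y = Fk l1 l2 l3 l4 x y" if "-1 \<le> x" "x \<le> int i" "-1 \<le> y" "y \<le> int j" for x y
        proof (cases "x < 0 \<or> y < 0")
          case True thus ?thesis by (simp add: PS_def Fk_def)
        next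
          case False
          then obtain a b where ab: "x = int a" "y = int b" by (metis nonneg_int_cases not_less)
          have "2*a \<le> ?W" "2*b \<le> ?W" using ab that True by auto
          hence mins: "min a (?W - a) = a" "min b (?W - b) = b" by auto
          have "kron_lhs [l1,l2,l3,l4] a (?W - a) b (?W - b) = kron_rhs ?W G a (?W - a) b (?W - b)"
            using PG by blast
          moreover have "a + (?W - a) = ?W" "b + (?W - b) = ?W" using \<open>2*a \<le> ?W\<close> \<open>2*b \<le> ?W\<close> by auto
          ultimately have "Fk l1 l2 l3 l4 (int a) (int b) = PS G (int a) (int b)"
            using key[of a "?W - a" b "?W - b"] rhs_eval[OF s, of G a "?W - a" b "?W - b"] mins by simp
          thus ?thesis using ab by simp
        qed
        have "G i j = PS G (int i) (int j) - PS G (int i - 1) (int j) - PS G (int i) (int j - 1) + PS G (int i - 1) (int j - 1)"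
          by (rule PS_diff)
        also have "\<dots> = G0 l1 l2 l3 l4 i j" using True by (simp add: G0_def PSF)
        finally show ?thesis .
      qed
    qed
  qed
  show ?thesis unfolding kron_family_def sl
    by (rule the_equality[where P="?P", OF P0 uniq])
qed

definition ff :: "int \<Rightarrow> int \<Rightarrow> int \<Rightarrow> int \<Rightarrow> int \<Rightarrow> int" where
 "ff a b c i j = max 0 (min (min b (i-b)) (min (a+b+c-j) (i+j-a-b-c)) - max c (i-a) + 1)"

lemma card_int_interval:
  fixes L U :: int
  assumes "0 \<le> L"
  shows "card {t::nat. L \<le> int t \<and> int t \<le> U} = nat (max 0 (U - L + 1))"
proof (cases "L \<le> U")
  case True
  have "{t::nat. L \<le> int t \<and> int t \<le> U} = {nat L..nat U}" using assms True by auto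
  thus ?thesis using assms True by simp
next
  case False
  hence e: "{t::nat. L \<le> int t \<and> int t \<le> U} = {}" by auto
  show ?thesis unfolding e using False by simp
qed

lemma countX:
  fixes a b c i j :: nat
  shows "card {(v1,v2,r). b \<le> v1 \<and> v1 \<le> a \<and> c \<le> v2 \<and> v2 \<le> b \<and> v2 \<le> r \<and> r \<le> v1 \<and> v1+v2 = i \<and> r + (a+b+c) = i+j}
       = nat (ff (int a) (int b) (int c) (int i) (int j))"
proof -
  let ?L = "max (int c) (int i - int a)"
  let ?U = "min (min (int b) (int i - int b)) (min (int a + int b + int c - int j) (int i + int j - int a - int b - int c))"
  let ?X = "{(v1,v2,r). b \<le> v1 \<and> v1 \<le> a \<and> c \<le> v2 \<and> v2 \<le> b \<and> v2 \<le> r \<and> r \<le> v1 \<and> v1+v2 = i \<and> r + (a+b+c) = i+j}"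
  let ?T = "{t::nat. ?L \<le> int t \<and> int t \<le> ?U}"
  let ?h = "\<lambda>t. (i - t, t, i + j - (a+b+c))"
  have e: "?X = ?h ` ?T"
  proof
    show "?X \<subseteq> ?h ` ?T"
    proof
      fix x assume "x \<in> ?X"
      then obtain v1 v2 r where x: "x = (v1,v2,r)" and c: "b \<le> v1" "v1 \<le> a" "c \<le> v2" "v2 \<le> b" "v2 \<le> r" "r \<le> v1" "v1+v2 = i" "r + (a+b+c) = i+j" by auto
      have "v2 \<in> ?T" using c by auto
      moreover have "x = ?h v2" using c x by auto
      ultimately show "x \<in> ?h ` ?T" by blast
    qed
    show "?h ` ?T \<subseteq> ?X"
    proof
      fix x assume "x \<in> ?h ` ?T"
      then obtain t where t: "t \<in> ?T" "x = ?h t" by blast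
      thus "x \<in> ?X" by auto
    qed
  qed
  have inj: "inj_on ?h ?T" by (rule inj_onI) auto
  have "card ?X = card ?T" unfolding e by (rule card_image[OF inj])
  also have "\<dots> = nat (max 0 (?U - ?L + 1))" by (rule card_int_interval) simp
  also have "\<dots> = nat (ff (int a) (int b) (int c) (int i) (int j))" unfolding ff_def by simp
  finally show ?thesis .
qed

definition Xs :: "nat \<Rightarrow> nat \<Rightarrow> nat \<times> nat \<times> nat \<Rightarrow> (nat \<times> nat \<times> nat) set" where
"Xs i j m = (case m of (a,b,c) \<Rightarrow> {(v1,v2,r). b \<le> v1 \<and> v1 \<le> a \<and> c \<le> v2 \<and> v2 \<le> b \<and> v2 \<le> r \<and> r \<le> v1 \<and> v1+v2 = i \<and> r + (a+b+c) = i+j})"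

lemma finite_Xs: "finite (Xs i j m)"
proof -
  obtain a b c where m: "m = (a,b,c)" by (cases m) auto
  show ?thesis unfolding m Xs_def
    by (rule finite_subset[of _ "{..a} \<times> {..a} \<times> {..a}"]) auto
qed

definition box :: "nat \<Rightarrow> nat \<Rightarrow> nat \<Rightarrow> nat \<Rightarrow> (nat \<times> nat \<times> nat) set" where
"box l1 l2 l3 l4 = {l2..l1} \<times> {l3..l2} \<times> {l4..l3}"

lemma GT_split:
  "card {g \<in> GT l1 l2 l3 l4. case g of (m1,m2,m3,v1,v2,r) \<Rightarrow> v1+v2 = i \<and> r + (m1+m2+m3) = i+j}
    = (\<Sum>m\<in>box l1 l2 l3 l4. card (Xs i j m))"
proof -
  let ?h = "\<lambda>(m::nat\<times>nat\<times>nat, x::nat\<times>nat\<times>nat). case m of (a,b,c) \<Rightarrow> case x of (v1,v2,r) \<Rightarrow> (a,b,c,v1,v2,r)"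
  let ?S = "Sigma (box l1 l2 l3 l4) (Xs i j)"
  have e: "{g \<in> GT l1 l2 l3 l4. case g of (m1,m2,m3,v1,v2,r) \<Rightarrow> v1+v2 = i \<and> r + (m1+m2+m3) = i+j} = ?h ` ?S"
  proof
    show "{g \<in> GT l1 l2 l3 l4. case g of (m1,m2,m3,v1,v2,r) \<Rightarrow> v1+v2 = i \<and> r + (m1+m2+m3) = i+j} \<subseteq> ?h ` ?S"
    proof
      fix g assume g: "g \<in> {g \<in> GT l1 l2 l3 l4. case g of (m1,m2,m3,v1,v2,r) \<Rightarrow> v1+v2 = i \<and> r + (m1+m2+m3) = i+j}"
      obtain m1 m2 m3 v1 v2 r where gg: "g = (m1,m2,m3,v1,v2,r)" by (cases g) auto
      have "((m1,m2,m3),(v1,v2,r)) \<in> ?S" using g unfolding gg by (auto simp: GT_def box_def Xs_def)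
      moreover have "g = ?h ((m1,m2,m3),(v1,v2,r))" using gg by simp
      ultimately show "g \<in> ?h ` ?S" by blast
    qed
    show "?h ` ?S \<subseteq> {g \<in> GT l1 l2 l3 l4. case g of (m1,m2,m3,v1,v2,r) \<Rightarrow> v1+v2 = i \<and> r + (m1+m2+m3) = i+j}"
      by (auto simp: GT_def box_def Xs_def)
  qed
  have inj: "inj_on ?h ?S" by (rule inj_onI) auto
  have fb: "finite (box l1 l2 l3 l4)" unfolding box_def by simp
  show ?thesis unfolding e card_image[OF inj]
    by (rule card_SigmaI[OF fb]) (simp add: finite_Xs)
qed

lemma Pc_arith:
  fixes l1 l2 l3 l4 m1 m2 m3 v1 v2 r i j :: nat
  assumes "m1 \<le> l1" "m2 \<le> l2" "m3 \<le> l3" "m2 \<le> v1" "v1 \<le> m1" "m3 \<le> v2" "v2 \<le> m2" "r \<le> v1" "v2 \<le> r"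
    "i \<le> l1+l2+l3+l4" "j \<le> l1+l2+l3+l4"
  shows "(r + (v1+v2-r) = i \<and> (m1+m2+m3-v1-v2) + (l1+l2+l3+l4 - (m1+m2+m3)) = l1+l2+l3+l4 - i
     \<and> r + (m1+m2+m3-v1-v2) = j \<and> (v1+v2-r) + (l1+l2+l3+l4-(m1+m2+m3)) = l1+l2+l3+l4 - j)
     \<longleftrightarrow> (v1+v2 = i \<and> r + (m1+m2+m3) = i + j)"
proof
  assume "v1+v2 = i \<and> r + (m1+m2+m3) = i + j"
  thus "(r + (v1+v2-r) = i \<and> (m1+m2+m3-v1-v2) + (l1+l2+l3+l4 - (m1+m2+m3)) = l1+l2+l3+l4 - i
     \<and> r + (m1+m2+m3-v1-v2) = j \<and> (v1+v2-r) + (l1+l2+l3+l4-(m1+m2+m3)) = l1+l2+l3+l4 - j)"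
    using assms by linarith
next
  assume "(r + (v1+v2-r) = i \<and> (m1+m2+m3-v1-v2) + (l1+l2+l3+l4 - (m1+m2+m3)) = l1+l2+l3+l4 - i
     \<and> r + (m1+m2+m3-v1-v2) = j \<and> (v1+v2-r) + (l1+l2+l3+l4-(m1+m2+m3)) = l1+l2+l3+l4 - j)"
  thus "v1+v2 = i \<and> r + (m1+m2+m3) = i + j" using assms by linarith
qed

lemma nth_list4: "[a,b,c,d]!0 = a" "[a,b,c,d]!1 = b" "[a,b,c,d]!2 = c" "[a,b,c,d]!3 = d"
  by (simp_all add: numeral_eq_Suc)

lemma Pc_GT:
  assumes "(m1,m2,m3,v1,v2,r) \<in> GT l1 l2 l3 l4" "i \<le> l1+l2+l3+l4" "j \<le> l1+l2+l3+l4"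
  shows "Pc i (l1+l2+l3+l4 - i) j (l1+l2+l3+l4 - j) (ct l1 l2 l3 l4 (m1,m2,m3,v1,v2,r)) \<longleftrightarrow> (v1+v2 = i \<and> r + (m1+m2+m3) = i + j)"
proof -
  have g: "m1 \<le> l1" "m2 \<le> l2" "m3 \<le> l3" "m2 \<le> v1" "v1 \<le> m1" "m3 \<le> v2" "v2 \<le> m2" "r \<le> v1" "v2 \<le> r"
    using assms(1) by (auto simp: GT_def)
  show ?thesis unfolding Pc_def ct_def prod.case nth_list4 by (rule Pc_arith[OF g assms(2,3)])
qed

lemma Fk_FF:
  assumes "i \<le> l1+l2+l3+l4" "j \<le> l1+l2+l3+l4"
  shows "Fk l1 l2 l3 l4 (int i) (int j) = (\<Sum>m\<in>box l1 l2 l3 l4. case m of (a,b,c) \<Rightarrow> ff (int a) (int b) (int c) (int i) (int j))"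
proof -
  let ?W = "l1+l2+l3+l4"
  have "{g \<in> GT l1 l2 l3 l4. Pc i (?W - i) j (?W - j) (ct l1 l2 l3 l4 g)} =
        {g \<in> GT l1 l2 l3 l4. case g of (m1,m2,m3,v1,v2,r) \<Rightarrow> v1+v2 = i \<and> r + (m1+m2+m3) = i+j}"
  proof (rule Collect_cong)
    fix g :: gt
    obtain m1 m2 m3 v1 v2 r where gg: "g = (m1,m2,m3,v1,v2,r)" by (cases g) auto
    show "(g \<in> GT l1 l2 l3 l4 \<and> Pc i (?W - i) j (?W - j) (ct l1 l2 l3 l4 g)) =
          (g \<in> GT l1 l2 l3 l4 \<and> (case g of (m1,m2,m3,v1,v2,r) \<Rightarrow> v1+v2 = i \<and> r + (m1+m2+m3) = i+j))"
      unfolding gg using Pc_GT[of m1 m2 m3 v1 v2 r l1 l2 l3 l4 i j] assms by auto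
  qed
  hence "Fk l1 l2 l3 l4 (int i) (int j) = int (\<Sum>m\<in>box l1 l2 l3 l4. card (Xs i j m))"
    unfolding Fk_def cnt_def using GT_split by simp
  also have "\<dots> = (\<Sum>m\<in>box l1 l2 l3 l4. int (card (Xs i j m)))" by simp
  also have "\<dots> = (\<Sum>m\<in>box l1 l2 l3 l4. case m of (a,b,c) \<Rightarrow> ff (int a) (int b) (int c) (int i) (int j))"
  proof (rule sum.cong)
    fix m assume "m \<in> box l1 l2 l3 l4"
    obtain a b c where m: "m = (a,b,c)" by (cases m) auto
    have "int (card (Xs i j m)) = int (nat (ff (int a) (int b) (int c) (int i) (int j)))"
      unfolding m Xs_def using countX by simp
    also have "\<dots> = ff (int a) (int b) (int c) (int i) (int j)" by (simp add: ff_def)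
    finally show "int (card (Xs i j m)) = (case m of (a,b,c) \<Rightarrow> ff (int a) (int b) (int c) (int i) (int j))" using m by simp
  qed simp
  finally show ?thesis .
qed

lemma simp1:
fixes l1 l2 l3 l4 M N a b c i j :: int
assumes "l4 \<ge> 0" "l3\<ge>l4" "l2\<ge>l3" "l1\<ge>l2" "l2\<le>a" "a\<le>l1" "l3\<le>b" "b\<le>l2" "l4\<le>c" "c\<le>l3" "N \<le> M" "2*M \<le> l1+l2+l3+l4" "l3+l4 \<le> N" "N \<le> l2+l4" "l3+l4+l2+l4 \<le> M+N" "M+N \<le> l3+l4+l2+l3" "M+N \<le> l3+l4+l1+l4"
 "M - 1 \<le> i" "i \<le> M" "N - 1 \<le> j" "j \<le> N"
shows "ff a b c i j = max 0 (min (i+j-a-b-c-c) (j-b-c) + 1)"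
proof -
  have h1: "i+j-a-b-c \<le> b" using assms by linarith
  have h2: "i+j-a-b-c \<le> i - b" using assms by linarith
  have h3: "i+j-a-b-c \<le> a+b+c-j" using assms by linarith
  have A: "min (min b (i-b)) (min (a+b+c-j) (i+j-a-b-c)) = i+j-a-b-c" using h1 h2 h3 by simp
  have B: "i+j-a-b-c - max c (i-a) = min (i+j-a-b-c-c) (j-b-c)" by (simp add: max_def min_def)
  show ?thesis unfolding ff_def A B ..
qed
lemma d2:
fixes l1 l2 l3 l4 M N a b c :: int
assumes "l4 \<ge> 0" "l3\<ge>l4" "l2\<ge>l3" "l1\<ge>l2" "l2\<le>a" "a\<le>l1" "l3\<le>b" "b\<le>l2" "l4\<le>c" "c\<le>l3" "N \<le> M" "2*M \<le> l1+l2+l3+l4" "l3+l4 \<le> N" "N \<le> l2+l4" "l3+l4+l2+l4 \<le> M+N" "M+N \<le> l3+l4+l2+l3" "M+N \<le> l3+l4+l1+l4"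
shows "max 0 (min (M+N-a-b-c-c) (N-b-c) + 1) - max 0 (min (M-1+N-a-b-c-c) (N-b-c) + 1)
  - max 0 (min (M+(N-1)-a-b-c-c) (N-1-b-c) + 1) + max 0 (min (M-1+(N-1)-a-b-c-c) (N-1-b-c) + 1) = (if a - l2 + b - l3 + 2*(c-l4) = M+N-l2-l3-2*l4 \<and> b - l3 + c - l4 \<le> N - l3 - l4 then 1 else 0)"
  using assms by (smt (z3))

lemma ff_zero:
fixes l1 l2 l3 l4 M N a b c i j :: int
assumes "l4 \<ge> 0" "l3\<ge>l4" "l2\<ge>l3" "l1\<ge>l2" "l2\<le>a" "a\<le>l1" "l3\<le>b" "b\<le>l2" "l4\<le>c" "c\<le>l3" "N \<le> M" "2*M \<le> l1+l2+l3+l4" "l3+l4 \<le> N" "N \<le> l2+l4" "l3+l4+l2+l4 \<le> M+N" "M+N \<le> l3+l4+l2+l3" "M+N \<le> l3+l4+l1+l4"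
 "M - 1 \<le> i" "i \<le> M" "N - 1 \<le> j" "j \<le> N" "i < 0 \<or> j < 0"
shows "ff a b c i j = 0"
proof -
  have "ff a b c i j = max 0 (min (i+j-a-b-c-c) (j-b-c) + 1)" by (rule simp1[OF assms(1-21)])
  moreover have "min (i+j-a-b-c-c) (j-b-c) + 1 \<le> 0" using assms by linarith
  ultimately show ?thesis by simp
qed

lemma count_pS:
  fixes l1 l2 l3 l4 M N :: nat
  assumes s: "l2 \<le> l1" "l3 \<le> l2" "l4 \<le> l3"
    and r: "l3 + l4 \<le> N" "N \<le> l2 + l4" "l3+l4+l2+l4 \<le> M+N" "M+N \<le> l3+l4+l2+l3" "M+N \<le> l3+l4+l1+l4"
  shows "card {m \<in> box l1 l2 l3 l4. case m of (a,b,c) \<Rightarrow>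
            int a - int l2 + int b - int l3 + 2*(int c - int l4) = int M + int N - int l2 - int l3 - 2*int l4
          \<and> int b - int l3 + int c - int l4 \<le> int N - int l3 - int l4}
       = pS (int N - int l3 - int l4) (int M + int N - int l2 - int l3 - 2*int l4)"
proof -
  let ?n = "int N - int l3 - int l4"
  let ?m = "int M + int N - int l2 - int l3 - 2*int l4"
  let ?Q = "{(x1 :: nat, x2 :: nat, x3 :: nat, x4 :: nat). int x1 + int x3 + int x4 = ?n \<and> int x2 + int x3 + 2 * int x4 = ?m}"
  let ?B = "{m \<in> box l1 l2 l3 l4. case m of (a,b,c) \<Rightarrow>
            int a - int l2 + int b - int l3 + 2*(int c - int l4) = int M + int N - int l2 - int l3 - 2*int l4
          \<and> int b - int l3 + int c - int l4 \<le> int N - int l3 - int l4}"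
  let ?h = "\<lambda>(x1::nat, x2::nat, x3::nat, x4::nat). (l2 + x2, l3 + x3, l4 + x4)"
  have pS: "pS ?n ?m = card ?Q" unfolding pS_def using r by auto
  have inj: "inj_on ?h ?Q"
  proof (rule inj_onI)
    fix x y assume "x \<in> ?Q" "y \<in> ?Q" "?h x = ?h y"
    thus "x = y" by (cases x; cases y) auto
  qed
  have im: "?h ` ?Q = ?B"
  proof
    show "?h ` ?Q \<subseteq> ?B"
    proof
      fix z assume "z \<in> ?h ` ?Q"
      then obtain x1 x2 x3 x4 where x: "(x1,x2,x3,x4) \<in> ?Q" "z = (l2 + x2, l3 + x3, l4 + x4)" by auto
      have e: "int x1 + int x3 + int x4 = ?n" "int x2 + int x3 + 2 * int x4 = ?m" using x(1) by auto
      have "l2 + x2 \<le> l1" "l3 + x3 \<le> l2" "l4 + x4 \<le> l3" using e r s by linarith+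
      thus "z \<in> ?B" using x(2) e by (auto simp: box_def)
    qed
    show "?B \<subseteq> ?h ` ?Q"
    proof
      fix z assume z: "z \<in> ?B"
      obtain a b c where zz: "z = (a,b,c)" by (cases z) auto
      have bx: "l2 \<le> a" "a \<le> l1" "l3 \<le> b" "b \<le> l2" "l4 \<le> c" "c \<le> l3" using z zz by (auto simp: box_def)
      have C: "int a - int l2 + int b - int l3 + 2*(int c - int l4) = int M + int N - int l2 - int l3 - 2*int l4"
          "int b - int l3 + int c - int l4 \<le> int N - int l3 - int l4" using z zz by auto
      let ?x = "(nat (?n - (int b - int l3) - (int c - int l4)), a - l2, b - l3, c - l4)"
      have "?x \<in> ?Q" using bx C by auto
      moreover have "z = ?h ?x" using zz bx by auto
      ultimately show "z \<in> ?h ` ?Q" by blast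
    qed
  qed
  show ?thesis unfolding pS im[symmetric] by (rule card_image[OF inj])
qed

lemma delta_term:
  fixes l1 l2 l3 l4 M N a b c :: nat
  assumes s: "l2 \<le> l1" "l3 \<le> l2" "l4 \<le> l3" and MN: "N \<le> M" "2*M \<le> l1+l2+l3+l4"
    and r: "l3 + l4 \<le> N" "N \<le> l2 + l4" "l3+l4+l2+l4 \<le> M+N" "M+N \<le> l3+l4+l2+l3" "M+N \<le> l3+l4+l1+l4"
    and bx: "l2 \<le> a" "a \<le> l1" "l3 \<le> b" "b \<le> l2" "l4 \<le> c" "c \<le> l3"
  shows "ff (int a) (int b) (int c) (int M) (int N) - ff (int a) (int b) (int c) (int M - 1) (int N)
       - ff (int a) (int b) (int c) (int M) (int N - 1) + ff (int a) (int b) (int c) (int M - 1) (int N - 1)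
     = (if int a - int l2 + int b - int l3 + 2*(int c - int l4) = int M + int N - int l2 - int l3 - 2*int l4
          \<and> int b - int l3 + int c - int l4 \<le> int N - int l3 - int l4 then 1 else 0)"
proof -
  have A: "int l4 \<ge> 0" "int l3 \<ge> int l4" "int l2 \<ge> int l3" "int l1 \<ge> int l2" "int l2 \<le> int a" "int a \<le> int l1"
    "int l3 \<le> int b" "int b \<le> int l2" "int l4 \<le> int c" "int c \<le> int l3" "int N \<le> int M"
    "2 * int M \<le> int l1 + int l2 + int l3 + int l4" "int l3 + int l4 \<le> int N" "int N \<le> int l2 + int l4"
    "int l3 + int l4 + int l2 + int l4 \<le> int M + int N" "int M + int N \<le> int l3 + int l4 + int l2 + int l3"
    "int M + int N \<le> int l3 + int l4 + int l1 + int l4" using assms by linarith+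
  have e1: "ff (int a) (int b) (int c) (int M) (int N) = max 0 (min (int M + int N - int a - int b - int c - int c) (int N - int b - int c) + 1)"
    by (rule simp1[OF A]) simp_all
  have e2: "ff (int a) (int b) (int c) (int M - 1) (int N) = max 0 (min (int M - 1 + int N - int a - int b - int c - int c) (int N - int b - int c) + 1)"
    by (rule simp1[OF A]) simp_all
  have e3: "ff (int a) (int b) (int c) (int M) (int N - 1) = max 0 (min (int M + (int N - 1) - int a - int b - int c - int c) (int N - 1 - int b - int c) + 1)"
    by (rule simp1[OF A]) simp_all
  have e4: "ff (int a) (int b) (int c) (int M - 1) (int N - 1) = max 0 (min (int M - 1 + (int N - 1) - int a - int b - int c - int c) (int N - 1 - int b - int c) + 1)"
    by (rule simp1[OF A]) simp_all
  show ?thesis unfolding e1 e2 e3 e4 by (rule d2[OF A])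
qed

definition FF :: "nat \<Rightarrow> nat \<Rightarrow> nat \<Rightarrow> nat \<Rightarrow> int \<Rightarrow> int \<Rightarrow> int" where
"FF l1 l2 l3 l4 x y = (\<Sum>m\<in>box l1 l2 l3 l4. case m of (a,b,c) \<Rightarrow> ff (int a) (int b) (int c) x y)"

lemma main1:
  fixes l1 l2 l3 l4 M N :: nat
  assumes s: "l2 \<le> l1" "l3 \<le> l2" "l4 \<le> l3" and MN: "N \<le> M" "2*M \<le> l1+l2+l3+l4"
    and r: "l3 + l4 \<le> N" "N \<le> l2 + l4" "l3+l4+l2+l4 \<le> M+N" "M+N \<le> l3+l4+l2+l3" "M+N \<le> l3+l4+l1+l4"
  shows "kron_family [l1,l2,l3,l4] M N = int (pS (int N - int l3 - int l4) (int M + int N - int l2 - int l3 - 2*int l4))"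
proof -
  let ?W = "l1+l2+l3+l4"
  let ?F = "Fk l1 l2 l3 l4"
  have FkFF: "?F x y = FF l1 l2 l3 l4 x y" if xy: "int M - 1 \<le> x" "x \<le> int M" "int N - 1 \<le> y" "y \<le> int N" for x y
  proof (cases "x < 0 \<or> y < 0")
    case False
    then obtain i j where ij: "x = int i" "y = int j" by (metis nonneg_int_cases not_less)
    have "i \<le> ?W" "j \<le> ?W" using ij xy MN by linarith+
    thus ?thesis unfolding ij FF_def by (rule Fk_FF)
  next
    case True
    have "?F x y = 0" using True by (simp add: Fk_def)
    moreover have "FF l1 l2 l3 l4 x y = 0" unfolding FF_def
    proof (rule sum.neutral, rule ballI)
      fix m assume "m \<in> box l1 l2 l3 l4"
      then obtain a b c where m: "m = (a,b,c)" "l2 \<le> a" "a \<le> l1" "l3 \<le> b" "b \<le> l2" "l4 \<le> c" "c \<le> l3" by (auto simp: box_def)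
      have A: "int l4 \<ge> 0" "int l3 \<ge> int l4" "int l2 \<ge> int l3" "int l1 \<ge> int l2" "int l2 \<le> int a" "int a \<le> int l1"
        "int l3 \<le> int b" "int b \<le> int l2" "int l4 \<le> int c" "int c \<le> int l3" "int N \<le> int M"
        "2 * int M \<le> int l1 + int l2 + int l3 + int l4" "int l3 + int l4 \<le> int N" "int N \<le> int l2 + int l4"
        "int l3 + int l4 + int l2 + int l4 \<le> int M + int N" "int M + int N \<le> int l3 + int l4 + int l2 + int l3"
        "int M + int N \<le> int l3 + int l4 + int l1 + int l4" using assms m by linarith+
      show "(case m of (a,b,c) \<Rightarrow> ff (int a) (int b) (int c) x y) = 0"
        unfolding m(1) prod.case by (rule ff_zero[OF A xy True])
    qed
    ultimately show ?thesis by simp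
  qed
  have "kron_family [l1,l2,l3,l4] M N = G0 l1 l2 l3 l4 M N" using kron_family_eq[OF s] by simp
  also have "\<dots> = ?F (int M) (int N) - ?F (int M - 1) (int N) - ?F (int M) (int N - 1) + ?F (int M - 1) (int N - 1)"
    using MN by (simp add: G0_def)
  also have "\<dots> = FF l1 l2 l3 l4 (int M) (int N) - FF l1 l2 l3 l4 (int M - 1) (int N) - FF l1 l2 l3 l4 (int M) (int N - 1) + FF l1 l2 l3 l4 (int M - 1) (int N - 1)"
    by (simp add: FkFF)
  also have "\<dots> = (\<Sum>m\<in>box l1 l2 l3 l4. case m of (a,b,c) \<Rightarrow>
        ff (int a) (int b) (int c) (int M) (int N) - ff (int a) (int b) (int c) (int M - 1) (int N)
       - ff (int a) (int b) (int c) (int M) (int N - 1) + ff (int a) (int b) (int c) (int M - 1) (int N - 1))"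
    unfolding FF_def by (simp add: sum.distrib sum_subtractf split_def)
  also have "\<dots> = (\<Sum>m\<in>box l1 l2 l3 l4. if (case m of (a,b,c) \<Rightarrow>
            int a - int l2 + int b - int l3 + 2*(int c - int l4) = int M + int N - int l2 - int l3 - 2*int l4
          \<and> int b - int l3 + int c - int l4 \<le> int N - int l3 - int l4) then 1 else 0)"
  proof (rule sum.cong)
    fix m assume "m \<in> box l1 l2 l3 l4"
    then obtain a b c where m: "m = (a,b,c)" "l2 \<le> a" "a \<le> l1" "l3 \<le> b" "b \<le> l2" "l4 \<le> c" "c \<le> l3" by (auto simp: box_def)
    show "(case m of (a,b,c) \<Rightarrow>
        ff (int a) (int b) (int c) (int M) (int N) - ff (int a) (int b) (int c) (int M - 1) (int N)
       - ff (int a) (int b) (int c) (int M) (int N - 1) + ff (int a) (int b) (int c) (int M - 1) (int N - 1)) =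
       (if (case m of (a,b,c) \<Rightarrow>
            int a - int l2 + int b - int l3 + 2*(int c - int l4) = int M + int N - int l2 - int l3 - 2*int l4
          \<and> int b - int l3 + int c - int l4 \<le> int N - int l3 - int l4) then 1 else 0)"
      unfolding m(1) prod.case by (rule delta_term[OF s MN r m(2-7)])
  qed simp
  also have "\<dots> = int (card {m \<in> box l1 l2 l3 l4. case m of (a,b,c) \<Rightarrow>
            int a - int l2 + int b - int l3 + 2*(int c - int l4) = int M + int N - int l2 - int l3 - 2*int l4
          \<and> int b - int l3 + int c - int l4 \<le> int N - int l3 - int l4})"
    by (subst sum.inter_filter[symmetric]) (simp_all add: box_def)
  also have "\<dots> = int (pS (int N - int l3 - int l4) (int M + int N - int l2 - int l3 - 2*int l4))"
    using count_pS[OF s r] by simp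
  finally show ?thesis .
qed

lemma part1:
  fixes l1 l2 l3 l4 m1 m2 n1 n2 :: nat
  assumes lam_part: "l1 \<ge> l2" "l2 \<ge> l3" "l3 \<ge> l4"
    and mu_part: "m1 \<ge> m2" and nu_part: "n1 \<ge> n2"
    and weight_mu: "m1 + m2 = l1 + l2 + l3 + l4"
    and weight_nu: "n1 + n2 = l1 + l2 + l3 + l4"
    and mu_nu: "m2 \<ge> n2"
    and reg: "l3 + l4 \<le> n2 \<and> n2 \<le> l2 + l4
          \<and> (l3 + l4) + (l2 + l4) \<le> m2 + n2
          \<and> m2 + n2 \<le> (l3 + l4) + min (l2 + l3) (l1 + l4)"
  shows "kron [m1, m2] [n1, n2] [l1, l2, l3, l4] = atomic_kron [m1, m2] [n1, n2] [l1, l2, l3, l4]"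
proof -
  have r: "l3 + l4 \<le> n2" "n2 \<le> l2 + l4" "l3+l4+l2+l4 \<le> m2+n2" "m2+n2 \<le> l3+l4+l2+l3" "m2+n2 \<le> l3+l4+l1+l4"
    using reg by auto
  have MN: "n2 \<le> m2" "2*m2 \<le> l1+l2+l3+l4" using mu_nu mu_part weight_mu by auto
  have "kron [m1, m2] [n1, n2] [l1, l2, l3, l4] = kron_family [l1,l2,l3,l4] m2 n2" by (simp add: kron_def)
  also have "\<dots> = int (pS (int n2 - int l3 - int l4) (int m2 + int n2 - int l2 - int l3 - 2*int l4))"
    by (rule main1[OF lam_part(1,2,3) MN r])
  also have "\<dots> = atomic_kron [m1, m2] [n1, n2] [l1, l2, l3, l4]" by (simp add: atomic_kron_def numeral_eq_Suc)
  finally show ?thesis .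
qed

theorem corollary3p4:
  fixes l1 l2 l3 l4 m1 m2 n1 n2 :: nat
  assumes lam_part: "l1 \<ge> l2" "l2 \<ge> l3" "l3 \<ge> l4"
    and mu_part: "m1 \<ge> m2" and nu_part: "n1 \<ge> n2"
    and weight_mu: "m1 + m2 = l1 + l2 + l3 + l4"
    and weight_nu: "n1 + n2 = l1 + l2 + l3 + l4"
    and mu_nu: "m2 \<ge> n2"
  shows "(l3 + l4 \<le> n2 \<and> n2 \<le> l2 + l4
          \<and> (l3 + l4) + (l2 + l4) \<le> m2 + n2
          \<and> m2 + n2 \<le> (l3 + l4) + min (l2 + l3) (l1 + l4)
          \<longrightarrow> kron [m1, m2] [n1, n2] [l1, l2, l3, l4] = atomic_kron [m1, m2] [n1, n2] [l1, l2, l3, l4])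
       \<and> (l2 + l3 \<le> l1 + l4
          \<and> int l4 \<le> int m2 + int n2 - int (l2 + l3 + l4)
          \<and> int m2 + int n2 - int (l2 + l3 + l4) \<le> int l3
          \<and> int l3 \<le> int n2 - int l4
          \<and> int n2 - int l4 \<le> int l2
          \<longrightarrow> kron [m1, m2] [n1, n2] [l1, l2, l3, l4] = atomic_kron [m1, m2] [n1, n2] [l1, l2, l3, l4])"
proof (intro conjI impI)
  assume "l3 + l4 \<le> n2 \<and> n2 \<le> l2 + l4
          \<and> (l3 + l4) + (l2 + l4) \<le> m2 + n2
          \<and> m2 + n2 \<le> (l3 + l4) + min (l2 + l3) (l1 + l4)"
  thus "kron [m1, m2] [n1, n2] [l1, l2, l3, l4] = atomic_kron [m1, m2] [n1, n2] [l1, l2, l3, l4]"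
    by (rule part1[OF assms])
next
  assume h: "l2 + l3 \<le> l1 + l4
          \<and> int l4 \<le> int m2 + int n2 - int (l2 + l3 + l4)
          \<and> int m2 + int n2 - int (l2 + l3 + l4) \<le> int l3
          \<and> int l3 \<le> int n2 - int l4
          \<and> int n2 - int l4 \<le> int l2"
  have "l3 + l4 \<le> n2 \<and> n2 \<le> l2 + l4
          \<and> (l3 + l4) + (l2 + l4) \<le> m2 + n2
          \<and> m2 + n2 \<le> (l3 + l4) + min (l2 + l3) (l1 + l4)"
    using h by (auto simp: min_def)
  thus "kron [m1, m2] [n1, n2] [l1, l2, l3, l4] = atomic_kron [m1, m2] [n1, n2] [l1, l2, l3, l4]"
    by (rule part1[OF assms])
qed

end
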